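(* Let $G$ be a discrete group and $(T_t)_{t\geq0}$ a Markovian semigroup of Fourier multipliers on the group von Neumann algebra $\mathrm{VN}(G)$, $T_t(\lambda_s)=e^{-t\psi(s)}\lambda_s$, where $\psi\colon G\to\mathbb{R}$ is conditionally negative definite with $\psi(e)=0$, and let $H$ be a real Hilbert space, $\pi\colon G\to\mathrm{O}(H)$ a homomorphism and $b_\psi\colon G\to H$ a map with $b_\psi(st)=b_\psi(s)+\pi_s(b_\psi(t))$ for all $s,t\in G$ and $\psi(s)=\|b_\psi(s)\|_H^2$ for all $s\in G$. Assume that $H$ is finite-dimensional of dimension $d$, that the set $\{s\in G:\psi(s)=0\}$ is finite, and that $\inf\{\|b_\psi(s)-b_\psi(t)\|_H^2: s,t\in G,\ b_\psi(s)\neq b_\psi(t)\}>0$. Then there is $C>0$ with $$\|T_t\|_{\mathrm{cb},\mathrm{L}^1(\mathrm{VN}(G))\to\mathrm{L}^\infty(\mathrm{VN}(G))}\leq \frac{C}{t^{d/2}},\quad 0<t\leq1.$$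
   Context: $\mathrm{VN}(G)$ is equipped with its canonical normalized trace $\tau(x)=\langle\delta_e,x\delta_e\rangle$; $\lambda_s$ are the left translation operators. $\mathrm{L}^1(\mathrm{VN}(G))$ carries its operator space structure as predual of $\mathrm{VN}(G)^{\mathrm{op}}$. *)

theory Defs
  imports "HOL-Analysis.Analysis"
begin

definition l2 :: "('a \<Rightarrow> complex) set" where
  "l2 = {f. (\<lambda>x. (cmod (f x))^2) summable_on UNIV}"

definition l2_norm :: "('a \<Rightarrow> complex) \<Rightarrow> real" where
  "l2_norm f = sqrt (infsum (\<lambda>x. (cmod (f x))^2) UNIV)"

type_synonym 'a op = "('a \<Rightarrow> complex) \<Rightarrow> ('a \<Rightarrow> complex)"

definition bounded_op :: "'a op \<Rightarrow> bool" where
  "bounded_op A \<longleftrightarrow>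
     (\<forall>f\<in>l2. A f \<in> l2) \<and>
     (\<forall>f\<in>l2. \<forall>g\<in>l2. A (\<lambda>x. f x + g x) = (\<lambda>x. A f x + A g x)) \<and>
     (\<forall>f\<in>l2. \<forall>c. A (\<lambda>x. c * f x) = (\<lambda>x. c * A f x)) \<and>
     (\<exists>K. \<forall>f\<in>l2. l2_norm (A f) \<le> K * l2_norm f)"

definition op_norm :: "'a op \<Rightarrow> real" where
  "op_norm A = Sup ((\<lambda>f. l2_norm (A f)) ` {f \<in> l2. l2_norm f \<le> 1})"

definition commutant :: "'a op set \<Rightarrow> 'a op set" where
  "commutant S = {B. bounded_op B \<and> (\<forall>A\<in>S. \<forall>f\<in>l2. A (B f) = B (A f))}"

text \<open>Discrete group G = the type 'g (class group_add, written additively: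
  e = 0, st = s + t, s^-1 = -s). Left translation lambda_s on l2(G):
  (lambda_s f)(x) = f(s^-1 x).\<close>
definition lam :: "'g::group_add \<Rightarrow> 'g op" where
  "lam s = (\<lambda>f x. f (- s + x))"

definition VN :: "('g::group_add) op set" where
  "VN = commutant (commutant (range lam))"

definition delta_e :: "'g::group_add \<Rightarrow> complex" where
  "delta_e = (\<lambda>x. if x = 0 then 1 else 0)"

text \<open>Canonical trace tau(x) = <delta_e, x delta_e>.\<close>
definition tau :: "('g::group_add) op \<Rightarrow> complex" where
  "tau x = x delta_e 0"

text \<open>Fourier multiplier T_t: the element of VN(G) with Fourier coefficients
  tau(lambda_s^* T_t x) = (T_t x delta_e)(s) = e^(-t psi(s)) tau(lambda_s^* x);
  equivalently the normal extension of T_t(lambda_s) = e^(-t psi s) lambda_s.\<close>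
definition fourier_mult :: "('g::group_add \<Rightarrow> real) \<Rightarrow> real \<Rightarrow> 'g op \<Rightarrow> 'g op" where
  "fourier_mult psi t x =
     (SOME y. y \<in> VN \<and> (\<forall>s. y delta_e s = complex_of_real (exp (- t * psi s)) * x delta_e s))"

text \<open>Matrix amplification: an n x n matrix of operators on l2(G) acts on l2(G x {..<n}).\<close>
definition amp :: "nat \<Rightarrow> (nat \<Rightarrow> nat \<Rightarrow> 'a op) \<Rightarrow> ('a \<times> nat) op" where
  "amp n X F = (\<lambda>(g, i). if i < n then (\<Sum>j<n. X i j (\<lambda>h. F (h, j)) g) else 0)"

text \<open>Norm on M_n(VN(G)) (= M_n(L^infty(VN(G)))).\<close>
definition mat_norm :: "nat \<Rightarrow> (nat \<Rightarrow> nat \<Rightarrow> 'a op) \<Rightarrow> real" where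
  "mat_norm n X = op_norm (amp n X)"

definition smat_norm :: "nat \<Rightarrow> (nat \<Rightarrow> nat \<Rightarrow> complex) \<Rightarrow> real" where
  "smat_norm k a = op_norm (\<lambda>F::nat \<Rightarrow> complex. \<lambda>i. if i < k then (\<Sum>j<k. a i j * F j) else 0)"

text \<open>Norm of M_n(L^1(VN(G))) on the dense subspace M_n(VN(G)), where x in VN(G)
  is identified with the normal functional y \<mapsto> tau(x y) on VN(G)^op:
  ||[x_ij]|| = cb-norm of y \<mapsto> [tau(x_ij y)] from VN(G)^op to M_n, i.e. the sup over m
  and [y_kl] in the unit ball of M_m(VN(G)^op) (whose norm is that of the transpose
  [y_lk] in M_m(VN(G))) of the norm of [tau(x_ij y_kl)] in M_m(M_n) = M_(mn)
  (row index k*n+i, column index l*n+j).\<close>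
definition L1_mat_norm :: "nat \<Rightarrow> (nat \<Rightarrow> nat \<Rightarrow> ('g::group_add) op) \<Rightarrow> real" where
  "L1_mat_norm n X = Sup {smat_norm (m * n)
        (\<lambda>r c. tau (X (r mod n) (c mod n) \<circ> Y (r div n) (c div n))) | m Y.
        (\<forall>k<m. \<forall>l<m. Y k l \<in> VN) \<and> mat_norm m (\<lambda>k l. Y l k) \<le> 1}"

definition cond_neg_def :: "('g::group_add \<Rightarrow> real) \<Rightarrow> bool" where
  "cond_neg_def psi \<longleftrightarrow> (\<forall>s. psi (- s) = psi s) \<and>
     (\<forall>(n::nat) (a::nat \<Rightarrow> real) (s::nat \<Rightarrow> 'g). (\<Sum>i<n. a i) = 0 \<longrightarrow>
        (\<Sum>i<n. \<Sum>j<n. a i * a j * psi (- s i + s j)) \<le> 0)"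

definition orth_on :: "'h::real_inner set \<Rightarrow> ('h \<Rightarrow> 'h) \<Rightarrow> bool" where
  "orth_on H u \<longleftrightarrow> linear u \<and> bij_betw u H H \<and> (\<forall>x\<in>H. norm (u x) = norm x)"

end

theory Submission
  imports Defs
begin
lemma nonneg_fin_bound:
  fixes f :: "'a \<Rightarrow> real"
  assumes "\<And>x. x \<in> A \<Longrightarrow> f x \<ge> 0" "\<And>F. finite F \<Longrightarrow> F \<subseteq> A \<Longrightarrow> sum f F \<le> B"
  shows "f summable_on A" "infsum f A \<le> B"
proof -
  have "bdd_above (sum f ` {F. F\<subseteq>A \<and> finite F})"
    using assms(2) by (auto intro!: bdd_aboveI[where M=B])
  then show s: "f summable_on A" using nonneg_bdd_above_summable_on assms(1) by blast
  show "infsum f A \<le> B" using infsum_le_finite_sums[OF s] assms(2) by blast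
qed

lemma amgm_opt:
  fixes S P Q :: real
  assumes h: "\<And>l. l > 0 \<Longrightarrow> S \<le> (l*P + Q/l)/2" and P: "P \<ge> 0" and Q: "Q \<ge> 0"
  shows "S \<le> sqrt P * sqrt Q"
proof (cases "P > 0 \<and> Q > 0")
  case True
  define l where "l = sqrt Q / sqrt P"
  have l: "l > 0" using True by (simp add: l_def)
  have sP: "sqrt P * sqrt P = P" "sqrt P > 0" using True by auto
  have sQ: "sqrt Q * sqrt Q = Q" "sqrt Q > 0" using True by auto
  have "l * P = sqrt P * sqrt Q" unfolding l_def using sP sQ
    by (metis mult.commute nonzero_mult_div_cancel_left order_less_irrefl times_divide_eq_left)
  moreover have "Q / l = sqrt P * sqrt Q" unfolding l_def using sP sQ
    by (metis divide_divide_eq_right mult.commute nonzero_mult_div_cancel_left order_less_irrefl)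
  ultimately show ?thesis using h[OF l] by simp
next
  case False
  show ?thesis
  proof (rule ccontr)
    assume a: "\<not> S \<le> sqrt P * sqrt Q"
    then have S: "S > 0" using False P Q by auto
    show False
    proof (cases "P = 0")
      case True
      define l where "l = Q / S + 1"
      have l: "l > 0" using S Q by (simp add: l_def add_nonneg_pos)
      have "2 * l * S = 2 * Q + 2 * S" using S unfolding l_def by (simp add: field_simps)
      then have "Q < 2 * l * S" using S Q by linarith
      then have "Q / l / 2 < S" using l by (simp add: field_simps)
      then show False using h[OF l] True by simp
    next
      case F: False
      then have Q0: "Q = 0" using False P Q by auto
      define l where "l = S / (P + 1)"
      have l: "l > 0" using S P by (simp add: l_def)
      have "P / (P + 1) \<le> 1" using P by simp
      then have "S * (P / (P + 1)) \<le> S * 1" using S by (intro mult_left_mono) auto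
      moreover have "l * P = S * (P / (P + 1))" unfolding l_def by simp
      ultimately have "l * P < 2 * S" using S by linarith
      then show False using h[OF l] Q0 by simp
    qed
  qed
qed

lemma wcs:
  fixes w p q :: "'a \<Rightarrow> real"
  assumes w: "\<And>x. w x \<ge> 0" and p: "\<And>x. p x \<ge> 0" and q: "\<And>x. q x \<ge> 0"
    and sp: "(\<lambda>x. w x * (p x)\<^sup>2) summable_on A" and sq: "(\<lambda>x. w x * (q x)\<^sup>2) summable_on A"
  shows "(\<lambda>x. w x * p x * q x) summable_on A"
    and "infsum (\<lambda>x. w x * p x * q x) A \<le> sqrt (infsum (\<lambda>x. w x * (p x)\<^sup>2) A) * sqrt (infsum (\<lambda>x. w x * (q x)\<^sup>2) A)"
proof -
  have key: "w x * p x * q x \<le> (l/2) * (w x * (p x)\<^sup>2) + (1/(2*l)) * (w x * (q x)\<^sup>2)" if "l > 0" for l x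
  proof -
    have "0 \<le> (l * p x - q x)\<^sup>2" by simp
    then have "2 * l * p x * q x \<le> l\<^sup>2 * (p x)\<^sup>2 + (q x)\<^sup>2" by (simp add: power2_eq_square algebra_simps)
    then have "w x * (2 * l * p x * q x) \<le> w x * (l\<^sup>2 * (p x)\<^sup>2 + (q x)\<^sup>2)" using w by (rule mult_left_mono) 
    then have "2 * l * (w x * p x * q x) \<le> l * (l * (w x * (p x)\<^sup>2)) + w x * (q x)\<^sup>2" 
      by (simp add: power2_eq_square algebra_simps)
    then show ?thesis using that by (simp add: field_simps)
  qed
  have s1: "(\<lambda>x. (l/2) * (w x * (p x)\<^sup>2) + (1/(2*l)) * (w x * (q x)\<^sup>2)) summable_on A" for l
    by (intro summable_on_add summable_on_cmult_right sp sq)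
  show s: "(\<lambda>x. w x * p x * q x) summable_on A"
    by (rule summable_on_comparison_test[OF s1[of 1]]) (use key[of 1] w p q in auto)
  show "infsum (\<lambda>x. w x * p x * q x) A \<le> sqrt (infsum (\<lambda>x. w x * (p x)\<^sup>2) A) * sqrt (infsum (\<lambda>x. w x * (q x)\<^sup>2) A)"
  proof (rule amgm_opt)
    fix l :: real assume l: "l > 0"
    have "infsum (\<lambda>x. w x * p x * q x) A \<le> infsum (\<lambda>x. (l/2) * (w x * (p x)\<^sup>2) + (1/(2*l)) * (w x * (q x)\<^sup>2)) A"
      by (rule infsum_mono[OF s s1]) (use key l in auto)
    also have "\<dots> = (l/2) * infsum (\<lambda>x. w x * (p x)\<^sup>2) A + (1/(2*l)) * infsum (\<lambda>x. w x * (q x)\<^sup>2) A"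
    proof -
      have "infsum (\<lambda>x. (l/2) * (w x * (p x)\<^sup>2) + (1/(2*l)) * (w x * (q x)\<^sup>2)) A
          = infsum (\<lambda>x. (l/2) * (w x * (p x)\<^sup>2)) A + infsum (\<lambda>x. (1/(2*l)) * (w x * (q x)\<^sup>2)) A"
        by (rule infsum_add) (intro summable_on_cmult_right sp sq)+
      also have "\<dots> = (l/2) * infsum (\<lambda>x. w x * (p x)\<^sup>2) A + (1/(2*l)) * infsum (\<lambda>x. w x * (q x)\<^sup>2) A"
        by (simp only: infsum_cmult_right[OF sp] infsum_cmult_right[OF sq])
      finally show ?thesis .
    qed
    also have "\<dots> = (l * infsum (\<lambda>x. w x * (p x)\<^sup>2) A + infsum (\<lambda>x. w x * (q x)\<^sup>2) A / l) / 2"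
      using l by (simp add: field_simps)
    finally show "infsum (\<lambda>x. w x * p x * q x) A \<le> (l * infsum (\<lambda>x. w x * (p x)\<^sup>2) A + infsum (\<lambda>x. w x * (q x)\<^sup>2) A / l) / 2" .
  qed (use w p q in \<open>auto intro!: infsum_nonneg\<close>)
qed

definition n2 :: "('a \<Rightarrow> complex) \<Rightarrow> real" where
  "n2 f = infsum (\<lambda>x. (cmod (f x))\<^sup>2) UNIV"

lemma l2_norm_n2: "l2_norm f = sqrt (n2 f)"
  by (simp add: l2_norm_def n2_def)

lemma l2_iff: "f \<in> l2 \<longleftrightarrow> (\<lambda>x. (cmod (f x))\<^sup>2) summable_on UNIV"
  by (simp add: l2_def)

lemma n2_nonneg: "n2 f \<ge> 0"
  unfolding n2_def by (intro infsum_nonneg) auto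

lemma l2_norm_nonneg: "l2_norm f \<ge> 0"
  by (simp add: l2_norm_n2 n2_nonneg)

lemma l2_norm_sq: "(l2_norm f)\<^sup>2 = n2 f"
  by (simp add: l2_norm_n2 n2_nonneg)

lemma l2_fin_le: "f \<in> l2 \<Longrightarrow> finite F \<Longrightarrow> (\<Sum>x\<in>F. (cmod (f x))\<^sup>2) \<le> n2 f"
  unfolding n2_def l2_iff by (intro finite_sum_le_infsum) auto

lemma l2_point: assumes "f \<in> l2" shows "cmod (f x) \<le> l2_norm f"
proof -
  have "(cmod (f x))\<^sup>2 \<le> n2 f" using l2_fin_le[OF assms, of "{x}"] by simp
  then show ?thesis unfolding l2_norm_n2 by (simp add: real_le_rsqrt)
qed

lemma l2_cs:
  assumes "f \<in> l2" "g \<in> l2"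
  shows "(\<lambda>x. cmod (f x) * cmod (g x)) summable_on UNIV"
    "infsum (\<lambda>x. cmod (f x) * cmod (g x)) UNIV \<le> l2_norm f * l2_norm g"
proof -
  have a: "(\<lambda>x. 1 * (cmod (f x))\<^sup>2) summable_on UNIV" "(\<lambda>x. 1 * (cmod (g x))\<^sup>2) summable_on UNIV"
    using assms by (auto simp: l2_iff)
  note w = wcs[of "\<lambda>_. 1" "\<lambda>x. cmod (f x)" "\<lambda>x. cmod (g x)", OF _ _ _ a]
  show "(\<lambda>x. cmod (f x) * cmod (g x)) summable_on UNIV" using w(1) by simp
  show "infsum (\<lambda>x. cmod (f x) * cmod (g x)) UNIV \<le> l2_norm f * l2_norm g"
    using w(2) by (simp add: l2_norm_def)
qed

lemma l2_prod:
  assumes "f \<in> l2" "g \<in> l2"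
  shows "(\<lambda>x. f x * g x) summable_on UNIV"
    "cmod (infsum (\<lambda>x. f x * g x) UNIV) \<le> l2_norm f * l2_norm g"
proof -
  have ab: "(\<lambda>x. norm (f x * g x)) summable_on UNIV"
    using l2_cs(1)[OF assms] by (simp add: norm_mult)
  then show "(\<lambda>x. f x * g x) summable_on UNIV" by (rule abs_summable_summable)
  have "cmod (infsum (\<lambda>x. f x * g x) UNIV) \<le> infsum (\<lambda>x. norm (f x * g x)) UNIV"
    by (rule norm_infsum_bound[OF ab])
  also have "\<dots> = infsum (\<lambda>x. cmod (f x) * cmod (g x)) UNIV" by (simp add: norm_mult)
  also have "\<dots> \<le> l2_norm f * l2_norm g" by (rule l2_cs(2)[OF assms])
  finally show "cmod (infsum (\<lambda>x. f x * g x) UNIV) \<le> l2_norm f * l2_norm g" .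
qed

lemma l2_zero[simp]: "(\<lambda>x. 0) \<in> l2"
  by (simp add: l2_iff)

lemma n2_zero[simp]: "n2 (\<lambda>x. 0) = 0" "l2_norm (\<lambda>x. 0) = 0"
  by (simp_all add: n2_def l2_norm_def)

lemma l2_scale: assumes "f \<in> l2" shows "(\<lambda>x. c * f x) \<in> l2"
  "n2 (\<lambda>x. c * f x) = (cmod c)\<^sup>2 * n2 f" "l2_norm (\<lambda>x. c * f x) = cmod c * l2_norm f"
proof -
  have e: "(\<lambda>x. (cmod (c * f x))\<^sup>2) = (\<lambda>x. (cmod c)\<^sup>2 * (cmod (f x))\<^sup>2)"
    by (simp add: norm_mult power_mult_distrib)
  show "(\<lambda>x. c * f x) \<in> l2" using assms unfolding l2_iff e by (intro summable_on_cmult_right)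
  show n: "n2 (\<lambda>x. c * f x) = (cmod c)\<^sup>2 * n2 f" unfolding n2_def e
    using assms by (simp add: infsum_cmult_right l2_iff)
  show "l2_norm (\<lambda>x. c * f x) = cmod c * l2_norm f"
    unfolding l2_norm_n2 n by (simp add: real_sqrt_mult)
qed

lemma cmod_add_sq: "(cmod (a + b))\<^sup>2 \<le> 2 * (cmod a)\<^sup>2 + 2 * (cmod b)\<^sup>2"
proof -
  have "cmod (a + b) \<le> cmod a + cmod b" by (rule norm_triangle_ineq)
  then have "(cmod (a + b))\<^sup>2 \<le> (cmod a + cmod b)\<^sup>2" by (simp add: power_mono)
  also have "\<dots> \<le> 2 * (cmod a)\<^sup>2 + 2 * (cmod b)\<^sup>2"
    using sum_squares_bound[of "cmod a" "cmod b"] by (simp add: power2_eq_square algebra_simps)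
  finally show ?thesis .
qed

lemma l2_add: assumes "f \<in> l2" "g \<in> l2" shows "(\<lambda>x. f x + g x) \<in> l2"
proof -
  have s: "(\<lambda>x. 2 * (cmod (f x))\<^sup>2 + 2 * (cmod (g x))\<^sup>2) summable_on UNIV"
    using assms unfolding l2_iff by (intro summable_on_add summable_on_cmult_right)
  show ?thesis unfolding l2_iff
    by (rule summable_on_comparison_test[OF s]) (auto simp: cmod_add_sq)
qed

lemma l2_uminus: assumes "f \<in> l2" shows "(\<lambda>x. - f x) \<in> l2" "l2_norm (\<lambda>x. - f x) = l2_norm f"
  using assms by (simp_all add: l2_iff l2_norm_def)

lemma l2_diff: assumes "f \<in> l2" "g \<in> l2" shows "(\<lambda>x. f x - g x) \<in> l2"
  using l2_add[OF assms(1) l2_uminus(1)[OF assms(2)]] by simp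

lemma l2_comparison: assumes "g \<in> l2" "\<And>x. cmod (f x) \<le> cmod (g x)" shows "f \<in> l2"
  using assms unfolding l2_iff
  by (intro summable_on_comparison_test[OF assms(1)[unfolded l2_iff]]) (auto intro: power_mono)

lemma l2_restrict: assumes "f \<in> l2" shows "(\<lambda>x. if x \<in> S then f x else 0) \<in> l2"
  by (rule l2_comparison[OF assms]) auto

lemma l2_fin_support: assumes "finite {x. f x \<noteq> 0}" shows "f \<in> l2"
  unfolding l2_iff using assms
  by (intro finite_nonzero_values_imp_summable_on) (auto elim: rev_finite_subset)

lemma l2_bij:
  assumes "bij h" "f \<in> l2"
  shows "(\<lambda>x. f (h x)) \<in> l2" "n2 (\<lambda>x. f (h x)) = n2 f" "l2_norm (\<lambda>x. f (h x)) = l2_norm f"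
proof -
  have i: "inj h" and r: "range h = UNIV" using assms(1) by (auto simp: bij_def)
  have "(\<lambda>x. (cmod (f x))\<^sup>2) summable_on (h ` UNIV)" using assms(2) r by (simp add: l2_iff)
  then show "(\<lambda>x. f (h x)) \<in> l2" unfolding l2_iff
    using summable_on_reindex[OF inj_on_subset[OF i subset_UNIV], of "\<lambda>x. (cmod (f x))\<^sup>2"] by (simp add: o_def)
  have "infsum (\<lambda>x. (cmod (f x))\<^sup>2) (h ` UNIV) = infsum ((\<lambda>x. (cmod (f x))\<^sup>2) \<circ> h) UNIV"
    by (rule infsum_reindex) (use i in auto)
  then show n: "n2 (\<lambda>x. f (h x)) = n2 f" unfolding n2_def using r by (simp add: o_def)
  show "l2_norm (\<lambda>x. f (h x)) = l2_norm f" by (simp add: l2_norm_n2 n)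
qed

definition dlt :: "'a \<Rightarrow> 'a \<Rightarrow> complex" where
  "dlt u = (\<lambda>x. if x = u then 1 else 0)"

lemma l2_dlt: "dlt u \<in> l2" "n2 (dlt u) = 1" "l2_norm (dlt u) = 1"
proof -
  have e: "(\<lambda>x. (cmod (dlt u x))\<^sup>2) = (\<lambda>x. if x = u then 1 else 0)" by (auto simp: dlt_def)
  show "dlt u \<in> l2" by (rule l2_fin_support) (auto simp: dlt_def)
  have "infsum (\<lambda>x. if x = u then 1 else 0 :: real) UNIV = 1"
    by (rule infsumI, rule has_sum_finite_neutralI[of "{u}"]) auto
  then show n: "n2 (dlt u) = 1" unfolding n2_def e .
  show "l2_norm (dlt u) = 1" by (simp add: l2_norm_n2 n)
qed

lemma l2_norm_zero: assumes "f \<in> l2" "l2_norm f = 0" shows "f = (\<lambda>x. 0)"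
proof
  fix x show "f x = 0" using l2_point[OF assms(1), of x] assms(2) by simp
qed

lemma l2_norm_le_iff_n2: "l2_norm f \<le> B \<longleftrightarrow> n2 f \<le> B\<^sup>2" if "B \<ge> 0"
proof -
  have "sqrt (B\<^sup>2) = B" using that by simp
  then show ?thesis unfolding l2_norm_n2 by (metis real_sqrt_le_iff)
qed

lemma l2_norm_scale_gen: "l2_norm (\<lambda>x. c * f x) = cmod c * l2_norm f"
proof -
  have e: "(\<lambda>x. (cmod (c * f x))\<^sup>2) = (\<lambda>x. (cmod c)\<^sup>2 * (cmod (f x))\<^sup>2)"
    by (simp add: norm_mult power_mult_distrib)
  have "n2 (\<lambda>x. c * f x) = (cmod c)\<^sup>2 * n2 f" unfolding n2_def e by (rule infsum_cmult_right')
  then show ?thesis unfolding l2_norm_n2 by (simp add: real_sqrt_mult)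
qed

lemma l2_sum: assumes "finite S" "\<And>u. u \<in> S \<Longrightarrow> h u \<in> l2"
  shows "(\<lambda>y. \<Sum>u\<in>S. c u * h u y) \<in> l2"
  using assms
proof (induction S rule: finite_induct)
  case empty then show ?case by simp
next
  case (insert v S)
  have "(\<lambda>y. c v * h v y + (\<Sum>u\<in>S. c u * h u y)) \<in> l2"
    by (rule l2_add) (use insert l2_scale in auto)
  then show ?case using insert by simp
qed

lemma bo_l2: "bounded_op A \<Longrightarrow> f \<in> l2 \<Longrightarrow> A f \<in> l2"
  unfolding bounded_op_def by blast
lemma bo_add: "bounded_op A \<Longrightarrow> f \<in> l2 \<Longrightarrow> g \<in> l2 \<Longrightarrow> A (\<lambda>x. f x + g x) = (\<lambda>x. A f x + A g x)"
  unfolding bounded_op_def by blast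
lemma bo_scale: "bounded_op A \<Longrightarrow> f \<in> l2 \<Longrightarrow> A (\<lambda>x. c * f x) = (\<lambda>x. c * A f x)"
  unfolding bounded_op_def by blast
lemma bo_bound: "bounded_op A \<Longrightarrow> \<exists>K. \<forall>f\<in>l2. l2_norm (A f) \<le> K * l2_norm f"
  unfolding bounded_op_def by blast

lemma bo_zero: assumes "bounded_op A" shows "A (\<lambda>x. 0) = (\<lambda>x. 0)"
proof -
  have "A (\<lambda>x. 0 * (0::complex)) = (\<lambda>x. 0 * A (\<lambda>x. 0) x)"
    using bo_scale[OF assms l2_zero, of 0] .
  then show ?thesis by simp
qed

lemma op_norm_le:
  assumes "\<And>f. f \<in> l2 \<Longrightarrow> l2_norm f \<le> 1 \<Longrightarrow> l2_norm (A f) \<le> B"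
  shows "op_norm A \<le> B"
  unfolding op_norm_def
proof (rule cSUP_least)
  have "(\<lambda>x. 0) \<in> {f \<in> l2. l2_norm f \<le> 1}" by simp
  then show "{f \<in> l2. l2_norm f \<le> 1} \<noteq> {}" by blast
qed (use assms in auto)

lemma op_norm_ge:
  assumes hom: "\<And>f c. f \<in> l2 \<Longrightarrow> A (\<lambda>x. c * f x) = (\<lambda>x. c * A f x)"
    and bnd: "\<And>f. f \<in> l2 \<Longrightarrow> l2_norm (A f) \<le> K * l2_norm f"
    and f: "f \<in> l2"
  shows "l2_norm (A f) \<le> op_norm A * l2_norm f"
proof -
  have bdd: "bdd_above ((\<lambda>f. l2_norm (A f)) ` {f \<in> l2. l2_norm f \<le> 1})"
  proof (rule bdd_aboveI[where M="max K 0"])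
    fix y assume "y \<in> (\<lambda>f. l2_norm (A f)) ` {f \<in> l2. l2_norm f \<le> 1}"
    then obtain g where g: "g \<in> l2" "l2_norm g \<le> 1" "y = l2_norm (A g)" by auto
    have "K * l2_norm g \<le> max K 0 * l2_norm g" by (intro mult_right_mono) (auto simp: l2_norm_nonneg)
    also have "\<dots> \<le> max K 0 * 1" using g by (intro mult_left_mono) auto
    finally show "y \<le> max K 0" using bnd[OF g(1)] g(3) by simp
  qed
  show ?thesis
  proof (cases "l2_norm f = 0")
    case True
    then have "f = (\<lambda>x. 0)" using l2_norm_zero f by blast
    then have "A f = (\<lambda>x. 0)" using hom[OF l2_zero, of 0] by simp
    then show ?thesis using True by simp
  next
    case False
    then have pos: "l2_norm f > 0" using l2_norm_nonneg[of f] by linarith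
    define g where "g = (\<lambda>x. complex_of_real (1 / l2_norm f) * f x)"
    have g1: "g \<in> l2" unfolding g_def by (rule l2_scale(1)[OF f])
    have "l2_norm g = cmod (complex_of_real (1 / l2_norm f)) * l2_norm f" unfolding g_def by (rule l2_scale(3)[OF f])
    also have "\<dots> = 1" using pos by (simp add: norm_divide)
    finally have g: "g \<in> l2" "l2_norm g = 1" using g1 by auto
    have "l2_norm (A g) \<le> op_norm A" unfolding op_norm_def
      by (rule cSUP_upper[OF _ bdd]) (use g in auto)
    have fe: "f = (\<lambda>x. complex_of_real (l2_norm f) * g x)" unfolding g_def using pos by auto
    have "A f = A (\<lambda>x. complex_of_real (l2_norm f) * g x)" by (subst fe, rule refl)
    also have "\<dots> = (\<lambda>x. complex_of_real (l2_norm f) * A g x)" by (rule hom[OF g(1)])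
    finally have "A f = (\<lambda>x. complex_of_real (l2_norm f) * A g x)" .
    then have "l2_norm (A f) = l2_norm f * l2_norm (A g)" using pos by (simp add: l2_norm_scale_gen)
    also have "\<dots> \<le> l2_norm f * op_norm A" using \<open>l2_norm (A g) \<le> op_norm A\<close> pos by simp
    finally show ?thesis by (simp add: mult.commute)
  qed
qed

lemma op_norm_bo: "bounded_op A \<Longrightarrow> f \<in> l2 \<Longrightarrow> l2_norm (A f) \<le> op_norm A * l2_norm f"
proof -
  assume A: "bounded_op A" and f: "f \<in> l2"
  obtain K where K: "\<forall>f\<in>l2. l2_norm (A f) \<le> K * l2_norm f" using bo_bound[OF A] by blast
  show ?thesis by (rule op_norm_ge[where K=K]) (use A K f bo_scale in auto)
qed

lemma bo_sum:
  assumes A: "bounded_op A" and S: "finite S" and h: "\<And>u. u \<in> S \<Longrightarrow> h u \<in> l2"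
  shows "A (\<lambda>y. \<Sum>u\<in>S. c u * h u y) = (\<lambda>y. \<Sum>u\<in>S. c u * A (h u) y)"
  using S h
proof (induction S rule: finite_induct)
  case empty then show ?case using bo_zero[OF A] by simp
next
  case (insert v S)
  have l: "(\<lambda>y. \<Sum>u\<in>S. c u * h u y) \<in> l2" using insert by (intro l2_sum) auto
  have hv: "h v \<in> l2" using insert by auto
  have "A (\<lambda>y. \<Sum>u\<in>insert v S. c u * h u y) = A (\<lambda>y. c v * h v y + (\<Sum>u\<in>S. c u * h u y))"
    using insert by simp
  also have "\<dots> = (\<lambda>y. A (\<lambda>y. c v * h v y) y + A (\<lambda>y. \<Sum>u\<in>S. c u * h u y) y)"
    by (rule bo_add[OF A l2_scale(1)[OF hv] l])
  also have "\<dots> = (\<lambda>y. c v * A (h v) y + (\<Sum>u\<in>S. c u * A (h u) y))"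
    using insert bo_scale[OF A hv] by simp
  finally show ?case using insert by simp
qed

definition rho :: "'g::group_add \<Rightarrow> 'g op" where
  "rho v = (\<lambda>f x. f (x + v))"

lemma bo_reindex: assumes "bij h" shows "bounded_op (\<lambda>f x. f (h x))"
  unfolding bounded_op_def using l2_bij[OF assms]
  by (intro conjI ballI allI exI[where x=1]) simp_all

lemma bij_add_right: "bij (\<lambda>x::'g::group_add. x + v)"
  by (rule o_bij[where g="\<lambda>x. x + - v"]) (auto simp: fun_eq_iff add.assoc)

lemma bij_add_left: "bij (\<lambda>x::'g::group_add. v + x)"
  by (rule o_bij[where g="\<lambda>x. - v + x"]) (auto simp: fun_eq_iff add.assoc[symmetric])

lemma bo_rho: "bounded_op (rho v)"
  unfolding rho_def by (rule bo_reindex[OF bij_add_right])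

lemma bo_lam: "bounded_op (lam s)"
  unfolding lam_def by (rule bo_reindex[OF bij_add_left])

lemma l2_rho: "f \<in> l2 \<Longrightarrow> rho v f \<in> l2" "f \<in> l2 \<Longrightarrow> l2_norm (rho v f) = l2_norm f"
  unfolding rho_def using l2_bij[OF bij_add_right] by auto

lemma l2_lam: "f \<in> l2 \<Longrightarrow> lam s f \<in> l2" "f \<in> l2 \<Longrightarrow> l2_norm (lam s f) = l2_norm f"
  unfolding lam_def using l2_bij[OF bij_add_left] by auto

lemma rho_comm: "rho v \<in> commutant (range lam)"
  unfolding commutant_def using bo_rho by (simp add: rho_def lam_def add.assoc)

lemma VN_bo: "x \<in> VN \<Longrightarrow> bounded_op x"
  by (simp add: VN_def commutant_def)

lemma VN_comm: "x \<in> VN \<Longrightarrow> A \<in> commutant (range lam) \<Longrightarrow> f \<in> l2 \<Longrightarrow> A (x f) = x (A f)"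
  by (simp add: VN_def commutant_def)

lemma VN_rho: "x \<in> VN \<Longrightarrow> f \<in> l2 \<Longrightarrow> x (rho v f) = rho v (x f)"
proof -
  assume a: "x \<in> VN" "f \<in> l2"
  show ?thesis using VN_comm[OF a(1) rho_comm a(2)] by simp
qed

lemma lam_VN: "lam s \<in> VN"
  unfolding VN_def commutant_def using bo_lam by auto

lemma delta_e_dlt: "delta_e = dlt 0"
  by (simp add: delta_e_def dlt_def fun_eq_iff)

lemma dlt_rho: "dlt (u::'g::group_add) = rho (- u) (dlt 0)"
  by (simp add: dlt_def rho_def fun_eq_iff eq_neg_iff_add_eq_0)

lemma n2_tail:
  assumes f: "f \<in> l2" and S: "finite S"
  shows "n2 (\<lambda>y. if y \<in> S then 0 else f y) = n2 f - (\<Sum>y\<in>S. (cmod (f y))\<^sup>2)"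
proof -
  define q where "q = (\<lambda>y. (cmod (f y))\<^sup>2)"
  have qs: "q summable_on UNIV" using f by (simp add: l2_iff q_def)
  have s1: "((\<lambda>y. if y \<in> S then q y else 0) has_sum (\<Sum>y\<in>S. q y)) UNIV"
    by (rule has_sum_finite_neutralI[OF S]) auto
  have s2: "(\<lambda>y. if y \<in> S then 0 else q y) summable_on UNIV"
    by (rule summable_on_comparison_test[OF qs]) (auto simp: q_def)
  have "infsum q UNIV = infsum (\<lambda>y. (if y \<in> S then q y else 0) + (if y \<in> S then 0 else q y)) UNIV"
    by (rule infsum_cong) auto
  also have "\<dots> = infsum (\<lambda>y. if y \<in> S then q y else 0) UNIV + infsum (\<lambda>y. if y \<in> S then 0 else q y) UNIV"
    by (rule infsum_add[OF has_sum_imp_summable[OF s1] s2])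
  also have "infsum (\<lambda>y. if y \<in> S then q y else 0) UNIV = (\<Sum>y\<in>S. q y)"
    using s1 by (rule infsumI)
  finally have "infsum (\<lambda>y. if y \<in> S then 0 else q y) UNIV = n2 f - (\<Sum>y\<in>S. q y)"
    by (simp add: n2_def q_def)
  moreover have "(\<lambda>y. (cmod (if y \<in> S then 0 else f y))\<^sup>2) = (\<lambda>y. if y \<in> S then 0 else q y)"
    by (auto simp: q_def fun_eq_iff)
  ultimately show ?thesis by (simp add: n2_def q_def)
qed

lemma rep_sum:
  fixes x :: "'g::group_add op"
  assumes bx: "bounded_op x" and rc: "\<And>v f. f \<in> l2 \<Longrightarrow> x (rho v f) = rho v (x f)" and f: "f \<in> l2"
  shows "((\<lambda>s. x (dlt 0) s * f (- s + g)) has_sum x f g) UNIV"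
proof -
  define a where "a = x (dlt 0)"
  have xd: "x (dlt u) = (\<lambda>y. a (y + - u))" for u
  proof -
    have "x (dlt u) = x (rho (- u) (dlt 0))" by (simp only: dlt_rho[of u])
    also have "\<dots> = rho (- u) a" unfolding a_def by (rule rc[OF l2_dlt(1)])
    finally show ?thesis by (simp add: rho_def)
  qed
  define fS where "fS S = (\<lambda>y. \<Sum>u\<in>S. f u * dlt u y)" for S
  have fS_eq: "fS S = (\<lambda>y. if y \<in> S then f y else 0)" if "finite S" for S
  proof
    fix y
    have "fS S y = (\<Sum>u\<in>S. if y = u then f u else 0)"
      unfolding fS_def dlt_def by (intro sum.cong) auto
    also have "\<dots> = (if y \<in> S then f y else 0)" using that by (simp add: sum.delta)
    finally show "fS S y = (if y \<in> S then f y else 0)" .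
  qed
  have fSl2: "fS S \<in> l2" if "finite S" for S
    using fS_eq[OF that] l2_restrict[OF f] by simp
  have xfS: "x (fS S) = (\<lambda>y. \<Sum>u\<in>S. f u * a (y + - u))" if "finite S" for S
  proof -
    have "x (fS S) = (\<lambda>y. \<Sum>u\<in>S. f u * x (dlt u) y)"
      unfolding fS_def by (rule bo_sum[OF bx that]) (rule l2_dlt(1))
    then show ?thesis by (simp add: xd)
  qed
  have tl2: "(\<lambda>y. f y - fS S y) \<in> l2" if "finite S" for S
    by (rule l2_diff[OF f fSl2[OF that]])
  have split: "x f g = x (fS S) g + x (\<lambda>y. f y - fS S y) g" if "finite S" for S
  proof -
    have "x f = x (\<lambda>y. fS S y + (f y - fS S y))" by simp
    also have "\<dots> = (\<lambda>y. x (fS S) y + x (\<lambda>y. f y - fS S y) y)"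
      by (rule bo_add[OF bx fSl2[OF that] tl2[OF that]])
    finally show ?thesis by simp
  qed
  obtain K where K: "\<forall>h\<in>l2. l2_norm (x h) \<le> K * l2_norm h" using bo_bound[OF bx] by blast
  have tail: "cmod (x (\<lambda>y. f y - fS S y) g) \<le> K * sqrt (n2 f - (\<Sum>y\<in>S. (cmod (f y))\<^sup>2))"
    if "finite S" for S
  proof -
    have e: "(\<lambda>y. f y - fS S y) = (\<lambda>y. if y \<in> S then 0 else f y)" using fS_eq[OF that] by auto
    have "cmod (x (\<lambda>y. f y - fS S y) g) \<le> l2_norm (x (\<lambda>y. f y - fS S y))"
      by (rule l2_point[OF bo_l2[OF bx tl2[OF that]]])
    also have "\<dots> \<le> K * l2_norm (\<lambda>y. f y - fS S y)" using K tl2[OF that] by blast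
    also have "l2_norm (\<lambda>y. f y - fS S y) = sqrt (n2 f - (\<Sum>y\<in>S. (cmod (f y))\<^sup>2))"
      unfolding e l2_norm_n2 n2_tail[OF f that] ..
    finally show ?thesis .
  qed
  have conv: "((\<lambda>S. \<Sum>y\<in>S. (cmod (f y))\<^sup>2) \<longlongrightarrow> n2 f) (finite_subsets_at_top UNIV)"
  proof -
    have "((\<lambda>y. (cmod (f y))\<^sup>2) has_sum n2 f) UNIV" using f by (simp add: l2_iff n2_def)
    then show ?thesis by (simp add: has_sum_def)
  qed
  have "((\<lambda>S. n2 f - (\<Sum>y\<in>S. (cmod (f y))\<^sup>2)) \<longlongrightarrow> n2 f - n2 f) (finite_subsets_at_top UNIV)"
    by (intro tendsto_diff tendsto_const conv)
  then have "((\<lambda>S. sqrt (n2 f - (\<Sum>y\<in>S. (cmod (f y))\<^sup>2))) \<longlongrightarrow> sqrt 0) (finite_subsets_at_top UNIV)"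
    by (intro tendsto_real_sqrt) simp
  then have b0: "((\<lambda>S. K * sqrt (n2 f - (\<Sum>y\<in>S. (cmod (f y))\<^sup>2))) \<longlongrightarrow> K * 0) (finite_subsets_at_top UNIV)"
    by (intro tendsto_mult tendsto_const) simp
  have "((\<lambda>S. x f g - (\<Sum>u\<in>S. f u * a (g + - u))) \<longlongrightarrow> 0) (finite_subsets_at_top UNIV)"
  proof (rule Lim_null_comparison)
    show "\<forall>\<^sub>F S in finite_subsets_at_top UNIV. norm (x f g - (\<Sum>u\<in>S. f u * a (g + - u))) \<le> K * sqrt (n2 f - (\<Sum>y\<in>S. (cmod (f y))\<^sup>2))"
    proof (rule eventually_finite_subsets_at_top_weakI)
      fix S :: "'g set" assume S: "finite S"
      have "x f g - (\<Sum>u\<in>S. f u * a (g + - u)) = x (\<lambda>y. f y - fS S y) g"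
        using split[OF S] xfS[OF S] by simp
      then show "norm (x f g - (\<Sum>u\<in>S. f u * a (g + - u))) \<le> K * sqrt (n2 f - (\<Sum>y\<in>S. (cmod (f y))\<^sup>2))"
        using tail[OF S] by simp
    qed
    show "((\<lambda>S. K * sqrt (n2 f - (\<Sum>y\<in>S. (cmod (f y))\<^sup>2))) \<longlongrightarrow> 0) (finite_subsets_at_top UNIV)"
      using b0 by simp
  qed
  then have "((\<lambda>S. x f g - (x f g - (\<Sum>u\<in>S. f u * a (g + - u)))) \<longlongrightarrow> x f g - 0) (finite_subsets_at_top UNIV)"
    by (intro tendsto_diff tendsto_const)
  then have "((\<lambda>u. f u * a (g + - u)) has_sum x f g) UNIV" by (simp add: has_sum_def)
  moreover have "((\<lambda>u. f u * a (g + - u)) has_sum x f g) UNIV = ((\<lambda>s. a s * f (- s + g)) has_sum x f g) UNIV"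
    by (rule has_sum_reindex_bij_witness[where i="\<lambda>s. - s + g" and j="\<lambda>u. g + - u"])
       (auto simp: add.assoc[symmetric] minus_add)
  ultimately show ?thesis by (simp add: a_def)
qed

lemma VN_rep:
  fixes x :: "'g::group_add op"
  assumes "x \<in> VN" "f \<in> l2"
  shows "((\<lambda>s. x (dlt 0) s * f (- s + g)) has_sum x f g) UNIV"
  by (rule rep_sum[OF VN_bo[OF assms(1)] VN_rho[OF assms(1)] assms(2)])

lemma has_sum_fsum:
  fixes h :: "'b \<Rightarrow> 'a \<Rightarrow> 'c::topological_comm_monoid_add"
  assumes "finite F" "\<And>i. i \<in> F \<Longrightarrow> (h i has_sum S i) A"
  shows "((\<lambda>x. \<Sum>i\<in>F. h i x) has_sum (\<Sum>i\<in>F. S i)) A"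
  using assms
proof (induction F rule: finite_induct)
  case empty then show ?case by simp
next
  case (insert j F)
  have "((\<lambda>x. h j x + (\<Sum>i\<in>F. h i x)) has_sum (S j + (\<Sum>i\<in>F. S i))) A"
    by (rule has_sum_add) (use insert in auto)
  then show ?case using insert by simp
qed

lemma infsum_fsum:
  fixes h :: "'b \<Rightarrow> 'a \<Rightarrow> 'c::{topological_comm_monoid_add, t2_space}"
  assumes "finite F" "\<And>i. i \<in> F \<Longrightarrow> h i summable_on A"
  shows "(\<lambda>x. \<Sum>i\<in>F. h i x) summable_on A" "infsum (\<lambda>x. \<Sum>i\<in>F. h i x) A = (\<Sum>i\<in>F. infsum (h i) A)"
proof -
  have "((\<lambda>x. \<Sum>i\<in>F. h i x) has_sum (\<Sum>i\<in>F. infsum (h i) A)) A"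
    by (rule has_sum_fsum[OF assms(1)]) (use assms(2) in auto)
  then show "(\<lambda>x. \<Sum>i\<in>F. h i x) summable_on A" "infsum (\<lambda>x. \<Sum>i\<in>F. h i x) A = (\<Sum>i\<in>F. infsum (h i) A)"
    by (auto simp: has_sum_iff)
qed

lemma has_sum_tail:
  fixes q :: "'a \<Rightarrow> 'c::{topological_ab_group_add}"
  assumes "(q has_sum T) UNIV" "finite S"
  shows "((\<lambda>y. if y \<in> S then 0 else q y) has_sum (T - (\<Sum>y\<in>S. q y))) UNIV"
proof -
  have s1: "((\<lambda>y. if y \<in> S then q y else 0) has_sum (\<Sum>y\<in>S. q y)) UNIV"
    by (rule has_sum_finite_neutralI[OF assms(2)]) auto
  have "((\<lambda>y. q y + - (if y \<in> S then q y else 0)) has_sum (T + - (\<Sum>y\<in>S. q y))) UNIV"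
    by (intro has_sum_add assms(1)) (simp add: has_sum_uminus s1)
  moreover have "(\<lambda>y. q y + - (if y \<in> S then q y else 0)) = (\<lambda>y. if y \<in> S then 0 else q y)" by auto
  ultimately show ?thesis by simp
qed

lemma point_le_sqrt:
  fixes u :: "'a \<Rightarrow> real"
  assumes "\<And>s. u s \<ge> 0" "(\<lambda>s. (u s)\<^sup>2) summable_on UNIV"
  shows "u y \<le> sqrt (infsum (\<lambda>s. (u s)\<^sup>2) UNIV)"
proof -
  have "(\<Sum>s\<in>{y}. (u s)\<^sup>2) \<le> infsum (\<lambda>s. (u s)\<^sup>2) UNIV"
    by (rule finite_sum_le_infsum[OF assms(2)]) auto
  then show ?thesis using assms(1)[of y] by (simp add: real_le_rsqrt)
qed

lemma young:
  fixes w u :: "'g::group_add \<Rightarrow> real"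
  assumes w0: "\<And>s. w s \<ge> 0" and ws: "w summable_on UNIV"
    and u0: "\<And>s. u s \<ge> 0" and us: "(\<lambda>s. (u s)\<^sup>2) summable_on UNIV"
  shows "(\<lambda>s. w s * u (- s + g)) summable_on UNIV"
    and "(\<lambda>g. (infsum (\<lambda>s. w s * u (- s + g)) UNIV)\<^sup>2) summable_on UNIV"
    and "infsum (\<lambda>g. (infsum (\<lambda>s. w s * u (- s + g)) UNIV)\<^sup>2) UNIV \<le> (infsum w UNIV)\<^sup>2 * infsum (\<lambda>s. (u s)\<^sup>2) UNIV"
proof -
  define W where "W = infsum w UNIV"
  define U where "U = infsum (\<lambda>s. (u s)\<^sup>2) UNIV"
  have W0: "W \<ge> 0" unfolding W_def using w0 by (intro infsum_nonneg) auto
  have U0: "U \<ge> 0" unfolding U_def by (intro infsum_nonneg) auto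
  have ub: "u y \<le> sqrt U" for y unfolding U_def by (rule point_le_sqrt[OF u0 us])
  have ub2: "(u y)\<^sup>2 \<le> U" for y using ub[of y] u0[of y] U0
    by (metis power_mono real_sqrt_pow2)
  have s1: "(\<lambda>s. w s * u (- s + g)) summable_on UNIV" for g
    by (rule summable_on_comparison_test[OF summable_on_cmult_left[OF ws, of "sqrt U"]])
       (use w0 u0 ub in \<open>auto intro: mult_left_mono\<close>)
  then show "(\<lambda>s. w s * u (- s + g)) summable_on UNIV" .
  have s2: "(\<lambda>s. w s * (u (- s + g))\<^sup>2) summable_on UNIV" for g
    by (rule summable_on_comparison_test[OF summable_on_cmult_left[OF ws, of U]])
       (use w0 u0 ub2 in \<open>auto intro: mult_left_mono\<close>)
  have pw: "(infsum (\<lambda>s. w s * u (- s + g)) UNIV)\<^sup>2 \<le> W * infsum (\<lambda>s. w s * (u (- s + g))\<^sup>2) UNIV" for g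
  proof -
    have a: "(\<lambda>s. w s * 1\<^sup>2) summable_on UNIV" using ws by simp
    note c = wcs[of w "\<lambda>s. u (- s + g)" "\<lambda>_. 1", OF w0 u0 _ s2 a]
    have "infsum (\<lambda>s. w s * u (- s + g)) UNIV \<le> sqrt (infsum (\<lambda>s. w s * (u (- s + g))\<^sup>2) UNIV) * sqrt W"
      using c(2) by (simp add: W_def)
    moreover have "infsum (\<lambda>s. w s * u (- s + g)) UNIV \<ge> 0"
      using w0 u0 by (intro infsum_nonneg) auto
    moreover have "infsum (\<lambda>s. w s * (u (- s + g))\<^sup>2) UNIV \<ge> 0"
      using w0 by (intro infsum_nonneg) auto
    ultimately have "(infsum (\<lambda>s. w s * u (- s + g)) UNIV)\<^sup>2 \<le> (sqrt (infsum (\<lambda>s. w s * (u (- s + g))\<^sup>2) UNIV) * sqrt W)\<^sup>2"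
      by (intro power_mono) auto
    also have "\<dots> = infsum (\<lambda>s. w s * (u (- s + g))\<^sup>2) UNIV * W"
      using W0 \<open>infsum (\<lambda>s. w s * (u (- s + g))\<^sup>2) UNIV \<ge> 0\<close> by (simp add: power_mult_distrib)
    finally show ?thesis by (simp add: mult.commute)
  qed
  have fin: "(\<Sum>g\<in>F. (infsum (\<lambda>s. w s * u (- s + g)) UNIV)\<^sup>2) \<le> W\<^sup>2 * U" if F: "finite F" for F
  proof -
    have "(\<Sum>g\<in>F. (infsum (\<lambda>s. w s * u (- s + g)) UNIV)\<^sup>2) \<le> (\<Sum>g\<in>F. W * infsum (\<lambda>s. w s * (u (- s + g))\<^sup>2) UNIV)"
      by (intro sum_mono pw)
    also have "\<dots> = W * (\<Sum>g\<in>F. infsum (\<lambda>s. w s * (u (- s + g))\<^sup>2) UNIV)"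
      by (simp add: sum_distrib_left)
    also have "(\<Sum>g\<in>F. infsum (\<lambda>s. w s * (u (- s + g))\<^sup>2) UNIV) = infsum (\<lambda>s. \<Sum>g\<in>F. w s * (u (- s + g))\<^sup>2) UNIV"
      by (rule infsum_fsum(2)[symmetric, OF F s2])
    also have "\<dots> \<le> infsum (\<lambda>s. w s * U) UNIV"
    proof (rule infsum_mono)
      show "(\<lambda>s. \<Sum>g\<in>F. w s * (u (- s + g))\<^sup>2) summable_on UNIV" by (rule infsum_fsum(1)[OF F s2])
      show "(\<lambda>s. w s * U) summable_on UNIV" by (rule summable_on_cmult_left[OF ws])
      fix s
      have "(\<Sum>g\<in>F. (u (- s + g))\<^sup>2) = (\<Sum>y\<in>(\<lambda>g. - s + g) ` F. (u y)\<^sup>2)"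
        by (rule sum.reindex[symmetric, unfolded o_def]) (auto intro: inj_onI)
      also have "\<dots> \<le> U" unfolding U_def
        by (rule finite_sum_le_infsum[OF us]) (use F in auto)
      finally have "(\<Sum>g\<in>F. (u (- s + g))\<^sup>2) \<le> U" .
      then have "w s * (\<Sum>g\<in>F. (u (- s + g))\<^sup>2) \<le> w s * U" using w0 by (intro mult_left_mono) auto
      then show "(\<Sum>g\<in>F. w s * (u (- s + g))\<^sup>2) \<le> w s * U" by (simp add: sum_distrib_left)
    qed
    also have "\<dots> = W * U" using infsum_cmult_left'[of w U UNIV] by (simp add: W_def)
    finally show ?thesis using W0 by (simp add: power2_eq_square mult_left_mono mult.assoc)
  qed
  note r = nonneg_fin_bound[of UNIV "\<lambda>g. (infsum (\<lambda>s. w s * u (- s + g)) UNIV)\<^sup>2" "W\<^sup>2 * U"]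
  show "(\<lambda>g. (infsum (\<lambda>s. w s * u (- s + g)) UNIV)\<^sup>2) summable_on UNIV" using r fin by auto
  show "infsum (\<lambda>g. (infsum (\<lambda>s. w s * u (- s + g)) UNIV)\<^sup>2) UNIV \<le> (infsum w UNIV)\<^sup>2 * infsum (\<lambda>s. (u s)\<^sup>2) UNIV"
    using r fin by (auto simp: W_def U_def)
qed

definition conv :: "('g::group_add \<Rightarrow> complex) \<Rightarrow> 'g op" where
  "conv c = (\<lambda>f g. infsum (\<lambda>s. c s * f (- s + g)) UNIV)"

definition l1n :: "('a \<Rightarrow> complex) \<Rightarrow> real" where
  "l1n c = infsum (\<lambda>s. cmod (c s)) UNIV"

lemma l1n_nonneg: "l1n c \<ge> 0"
  unfolding l1n_def by (intro infsum_nonneg) auto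

lemma neg_add_eq0: "(- x + g = (0::'g::group_add)) = (x = g)"
  by (metis add.left_inverse add_left_cancel)

lemma grp_cancel1: "(g::'g::group_add) - (- x + g) = x"
  by (simp add: diff_eq_eq add.assoc[symmetric])

lemma l2_shift: fixes f :: "'g::group_add \<Rightarrow> complex" shows "f \<in> l2 \<Longrightarrow> (\<lambda>s. f (- s + g)) \<in> l2"
proof -
  assume f: "f \<in> l2"
  have "bij (\<lambda>s::'g::group_add. - s + g)"
    by (rule o_bij[where g="\<lambda>y. g + - y"]) (auto simp: fun_eq_iff add.assoc[symmetric] grp_cancel1)
  then show ?thesis using l2_bij(1)[OF _ f] by blast
qed

lemma conv_summ:
  assumes c: "(\<lambda>s. cmod (c s)) summable_on UNIV" and f: "f \<in> l2"
  shows "(\<lambda>s. cmod (c s) * cmod (f (- s + g))) summable_on UNIV"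
    "(\<lambda>s. c s * f (- s + g)) summable_on UNIV"
    "cmod (conv c f g) \<le> infsum (\<lambda>s. cmod (c s) * cmod (f (- s + g))) UNIV"
proof -
  show s: "(\<lambda>s. cmod (c s) * cmod (f (- s + g))) summable_on UNIV"
    by (rule summable_on_comparison_test[OF summable_on_cmult_left[OF c, of "l2_norm f"]])
       (auto intro: mult_left_mono l2_point[OF f])
  have s': "(\<lambda>s. norm (c s * f (- s + g))) summable_on UNIV" using s by (simp add: norm_mult)
  then show "(\<lambda>s. c s * f (- s + g)) summable_on UNIV" by (rule abs_summable_summable)
  show "cmod (conv c f g) \<le> infsum (\<lambda>s. cmod (c s) * cmod (f (- s + g))) UNIV"
    unfolding conv_def using norm_infsum_bound[OF s'] by (simp add: norm_mult)
qed

lemma conv_l2: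
  assumes c: "(\<lambda>s. cmod (c s)) summable_on UNIV" and f: "f \<in> l2"
  shows "conv c f \<in> l2" "l2_norm (conv c f) \<le> l1n c * l2_norm f"
proof -
  have u: "(\<lambda>s. (cmod (f s))\<^sup>2) summable_on UNIV" using f by (simp add: l2_iff)
  note y = young[of "\<lambda>s. cmod (c s)" "\<lambda>s. cmod (f s)", OF _ c _ u]
  have le: "(cmod (conv c f g))\<^sup>2 \<le> (infsum (\<lambda>s. cmod (c s) * cmod (f (- s + g))) UNIV)\<^sup>2" for g
    by (intro power_mono conv_summ(3)[OF c f]) auto
  show l: "conv c f \<in> l2" unfolding l2_iff
    by (rule summable_on_comparison_test[OF y(2)]) (use le in auto)
  have "n2 (conv c f) \<le> infsum (\<lambda>g. (infsum (\<lambda>s. cmod (c s) * cmod (f (- s + g))) UNIV)\<^sup>2) UNIV"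
    unfolding n2_def by (rule infsum_mono[OF l[unfolded l2_iff] y(2)]) (use le in auto)
  also have "\<dots> \<le> (l1n c)\<^sup>2 * n2 f" using y(3) by (simp add: l1n_def n2_def)
  also have "\<dots> = (l1n c * l2_norm f)\<^sup>2" by (simp add: power_mult_distrib l2_norm_sq)
  finally show "l2_norm (conv c f) \<le> l1n c * l2_norm f"
    by (subst l2_norm_le_iff_n2) (auto simp: l1n_nonneg l2_norm_nonneg)
qed

lemma conv_bo:
  fixes c :: "'g::group_add \<Rightarrow> complex"
  assumes c: "(\<lambda>s. cmod (c s)) summable_on UNIV"
  shows "bounded_op (conv c)"
  unfolding bounded_op_def
proof (intro conjI ballI allI)
  fix f :: "'g \<Rightarrow> complex" assume f: "f \<in> l2"
  show "conv c f \<in> l2" by (rule conv_l2(1)[OF c f])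
  fix k :: complex
  show "conv c (\<lambda>x. k * f x) = (\<lambda>x. k * conv c f x)"
    unfolding conv_def by (simp add: infsum_cmult_right' mult.left_commute)
next
  fix f g :: "'g \<Rightarrow> complex" assume f: "f \<in> l2" and g: "g \<in> l2"
  show "conv c (\<lambda>x. f x + g x) = (\<lambda>x. conv c f x + conv c g x)"
    unfolding conv_def
    by (auto simp: distrib_left intro!: infsum_add conv_summ(2)[OF c f] conv_summ(2)[OF c g])
next
  show "\<exists>K. \<forall>f\<in>l2. l2_norm (conv c f) \<le> K * l2_norm f"
    using conv_l2(2)[OF c] by blast
qed

lemma conv_dlt: "conv c (dlt 0) = c"
proof
  fix g
  have "((\<lambda>s. c s * dlt 0 (- s + g)) has_sum c g) UNIV"
    by (rule has_sum_finite_neutralI[of "{g}"]) (auto simp: dlt_def neg_add_eq0)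
  then show "conv c (dlt 0) g = c g" unfolding conv_def by (rule infsumI)
qed

lemma conv_comm:
  fixes c :: "'g::group_add \<Rightarrow> complex"
  assumes c: "(\<lambda>s. cmod (c s)) summable_on UNIV"
    and B: "bounded_op B" and Bl: "\<And>s f. f \<in> l2 \<Longrightarrow> B (lam s f) = lam s (B f)" and f: "f \<in> l2"
  shows "B (conv c f) g = conv c (B f) g"
proof -
  define cS where "cS S = (\<lambda>s. if s \<in> S then 0 else c s)" for S
  have cSs: "(\<lambda>s. cmod (cS S s)) summable_on UNIV" for S
    by (rule summable_on_comparison_test[OF c]) (auto simp: cS_def)
  have l1tail: "l1n (cS S) = l1n c - (\<Sum>s\<in>S. cmod (c s))" if S: "finite S" for S
  proof -
    have "((\<lambda>s. cmod (c s)) has_sum l1n c) UNIV" using c by (simp add: l1n_def)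
    from has_sum_tail[OF this S] have h: "((\<lambda>y. if y \<in> S then 0 else cmod (c y)) has_sum (l1n c - (\<Sum>s\<in>S. cmod (c s)))) UNIV" .
    have e: "(\<lambda>y. cmod (cS S y)) = (\<lambda>y. if y \<in> S then 0 else cmod (c y))" by (auto simp: cS_def)
    have "((\<lambda>y. cmod (cS S y)) has_sum (l1n c - (\<Sum>s\<in>S. cmod (c s)))) UNIV" unfolding e by (rule h)
    then show ?thesis unfolding l1n_def by (rule infsumI)
  qed
  have lamf: "lam s f \<in> l2" for s by (rule l2_lam(1)[OF f])
  have split: "conv c f = (\<lambda>y. (\<Sum>s\<in>S. c s * lam s f y) + conv (cS S) f y)" if S: "finite S" for S
  proof
    fix y
    have "((\<lambda>s. c s * f (- s + y)) has_sum conv c f y) UNIV"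
      unfolding conv_def using conv_summ(2)[OF c f] by simp
    from has_sum_tail[OF this S]
    have h: "((\<lambda>s. if s \<in> S then 0 else c s * f (- s + y)) has_sum (conv c f y - (\<Sum>s\<in>S. c s * f (- s + y)))) UNIV" .
    have e: "(\<lambda>s. cS S s * f (- s + y)) = (\<lambda>s. if s \<in> S then 0 else c s * f (- s + y))" by (auto simp: cS_def)
    have "((\<lambda>s. cS S s * f (- s + y)) has_sum (conv c f y - (\<Sum>s\<in>S. c s * f (- s + y)))) UNIV"
      unfolding e by (rule h)
    then have "conv (cS S) f y = conv c f y - (\<Sum>s\<in>S. c s * f (- s + y))"
      unfolding conv_def by (rule infsumI)
    then show "conv c f y = (\<Sum>s\<in>S. c s * lam s f y) + conv (cS S) f y"
      by (simp add: lam_def)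
  qed
  obtain K where K: "\<forall>h\<in>l2. l2_norm (B h) \<le> K * l2_norm h" using bo_bound[OF B] by blast
  define K' where "K' = max K 0"
  have K': "l2_norm (B h) \<le> K' * l2_norm h" if "h \<in> l2" for h
  proof -
    have "K * l2_norm h \<le> K' * l2_norm h" unfolding K'_def by (intro mult_right_mono) (auto simp: l2_norm_nonneg)
    then show ?thesis using K that by fastforce
  qed
  have K'0: "K' \<ge> 0" by (simp add: K'_def)
  have Bsplit: "B (conv c f) g = (\<Sum>s\<in>S. c s * B f (- s + g)) + B (conv (cS S) f) g" if S: "finite S" for S
  proof -
    have P: "(\<lambda>y. \<Sum>s\<in>S. c s * lam s f y) \<in> l2" by (rule l2_sum[OF S lamf])
    have R: "conv (cS S) f \<in> l2" by (rule conv_l2(1)[OF cSs f])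
    have "B (conv c f) = B (\<lambda>y. (\<Sum>s\<in>S. c s * lam s f y) + conv (cS S) f y)"
      by (rule arg_cong[where f=B, OF split[OF S]])
    also have "\<dots> = (\<lambda>y. B (\<lambda>y. \<Sum>s\<in>S. c s * lam s f y) y + B (conv (cS S) f) y)"
      by (rule bo_add[OF B P R])
    also have "B (\<lambda>y. \<Sum>s\<in>S. c s * lam s f y) = (\<lambda>y. \<Sum>s\<in>S. c s * B (lam s f) y)"
      by (rule bo_sum[OF B S lamf])
    finally have h: "B (conv c f) = (\<lambda>y. (\<Sum>s\<in>S. c s * B (lam s f) y) + B (conv (cS S) f) y)" .
    then have "B (conv c f) = (\<lambda>y. (\<Sum>s\<in>S. c s * lam s (B f) y) + B (conv (cS S) f) y)"
      by (simp only: Bl[OF f])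
    then show ?thesis by (simp add: lam_def)
  qed
  have bnd: "cmod (B (conv (cS S) f) g) \<le> K' * ((l1n c - (\<Sum>s\<in>S. cmod (c s))) * l2_norm f)" if S: "finite S" for S
  proof -
    have R: "conv (cS S) f \<in> l2" by (rule conv_l2(1)[OF cSs f])
    have "cmod (B (conv (cS S) f) g) \<le> l2_norm (B (conv (cS S) f))" by (rule l2_point[OF bo_l2[OF B R]])
    also have "\<dots> \<le> K' * l2_norm (conv (cS S) f)" by (rule K'[OF R])
    also have "\<dots> \<le> K' * (l1n (cS S) * l2_norm f)" by (intro mult_left_mono conv_l2(2)[OF cSs f] K'0)
    finally show ?thesis by (simp add: l1tail[OF S])
  qed
  have conv1: "((\<lambda>S. \<Sum>s\<in>S. cmod (c s)) \<longlongrightarrow> l1n c) (finite_subsets_at_top UNIV)"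
  proof -
    have "((\<lambda>s. cmod (c s)) has_sum l1n c) UNIV" using c by (simp add: l1n_def)
    then show ?thesis by (simp add: has_sum_def)
  qed
  have b0: "((\<lambda>S. K' * ((l1n c - (\<Sum>s\<in>S. cmod (c s))) * l2_norm f)) \<longlongrightarrow> K' * ((l1n c - l1n c) * l2_norm f)) (finite_subsets_at_top UNIV)"
    by (intro tendsto_mult tendsto_diff tendsto_const conv1)
  have "((\<lambda>S. B (conv c f) g - (\<Sum>s\<in>S. c s * B f (- s + g))) \<longlongrightarrow> 0) (finite_subsets_at_top UNIV)"
  proof (rule Lim_null_comparison)
    show "\<forall>\<^sub>F S in finite_subsets_at_top UNIV. norm (B (conv c f) g - (\<Sum>s\<in>S. c s * B f (- s + g))) \<le> K' * ((l1n c - (\<Sum>s\<in>S. cmod (c s))) * l2_norm f)"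
    proof (rule eventually_finite_subsets_at_top_weakI)
      fix S :: "'g set" assume S: "finite S"
      show "norm (B (conv c f) g - (\<Sum>s\<in>S. c s * B f (- s + g))) \<le> K' * ((l1n c - (\<Sum>s\<in>S. cmod (c s))) * l2_norm f)"
        using Bsplit[OF S] bnd[OF S] by simp
    qed
    show "((\<lambda>S. K' * ((l1n c - (\<Sum>s\<in>S. cmod (c s))) * l2_norm f)) \<longlongrightarrow> 0) (finite_subsets_at_top UNIV)"
      using b0 by simp
  qed
  then have "((\<lambda>S. B (conv c f) g - (B (conv c f) g - (\<Sum>s\<in>S. c s * B f (- s + g)))) \<longlongrightarrow> B (conv c f) g - 0) (finite_subsets_at_top UNIV)"
    by (intro tendsto_diff tendsto_const)
  then have "((\<lambda>s. c s * B f (- s + g)) has_sum B (conv c f) g) UNIV" by (simp add: has_sum_def)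
  then show ?thesis unfolding conv_def by (rule infsumI[symmetric])
qed

lemma conv_VN:
  fixes c :: "'g::group_add \<Rightarrow> complex"
  assumes c: "(\<lambda>s. cmod (c s)) summable_on UNIV"
  shows "conv c \<in> VN"
  unfolding VN_def
proof -
  have "\<forall>A\<in>commutant (range lam). \<forall>f\<in>l2. A (conv c f) = conv c (A f)"
  proof (intro ballI)
    fix A :: "'g op" and f :: "'g \<Rightarrow> complex"
    assume A: "A \<in> commutant (range lam)" and f: "f \<in> l2"
    have Ab: "bounded_op A" using A by (simp add: commutant_def)
    have Al: "A (lam s h) = lam s (A h)" if "h \<in> l2" for s h
      using A that unfolding commutant_def by auto
    show "A (conv c f) = conv c (A f)"
      by (rule ext, rule conv_comm[OF c Ab Al f])
  qed
  then show "conv c \<in> commutant (commutant (range lam))"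
    unfolding commutant_def[of "commutant (range lam)"] using conv_bo[OF c] by blast
qed

lemma fm_spec:
  fixes psi :: "'g::group_add \<Rightarrow> real"
  assumes x: "x \<in> VN" and phi: "(\<lambda>s. exp (- t * psi s)) summable_on UNIV"
  shows "fourier_mult psi t x \<in> VN"
    "\<And>s. fourier_mult psi t x delta_e s = complex_of_real (exp (- t * psi s)) * x delta_e s"
proof -
  define c where "c s = complex_of_real (exp (- t * psi s)) * x delta_e s" for s
  have xd: "x delta_e \<in> l2" unfolding delta_e_dlt by (rule bo_l2[OF VN_bo[OF x] l2_dlt(1)])
  have cs: "(\<lambda>s. cmod (c s)) summable_on UNIV"
    by (rule summable_on_comparison_test[OF summable_on_cmult_left[OF phi, of "l2_norm (x delta_e)"]])
       (auto simp: c_def norm_mult intro!: mult_left_mono l2_point[OF xd])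
  have ex: "\<exists>y. y \<in> VN \<and> (\<forall>s. y delta_e s = complex_of_real (exp (- t * psi s)) * x delta_e s)"
    by (rule exI[where x="conv c"]) (simp add: conv_VN[OF cs] delta_e_dlt conv_dlt c_def)
  have "fourier_mult psi t x \<in> VN \<and> (\<forall>s. fourier_mult psi t x delta_e s = complex_of_real (exp (- t * psi s)) * x delta_e s)"
    unfolding fourier_mult_def by (rule someI_ex[OF ex])
  then show "fourier_mult psi t x \<in> VN"
    "\<And>s. fourier_mult psi t x delta_e s = complex_of_real (exp (- t * psi s)) * x delta_e s" by auto
qed

lemma n2_fin_nat:
  fixes z :: "nat \<Rightarrow> complex"
  assumes "\<And>i. i \<ge> n \<Longrightarrow> z i = 0"
  shows "z \<in> l2" "n2 z = (\<Sum>i<n. (cmod (z i))\<^sup>2)"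
proof -
  have h: "((\<lambda>i. (cmod (z i))\<^sup>2) has_sum (\<Sum>i<n. (cmod (z i))\<^sup>2)) UNIV"
    by (rule has_sum_finite_neutralI[of "{..<n}"]) (use assms in \<open>auto simp: not_less\<close>)
  show "z \<in> l2" using has_sum_imp_summable[OF h] by (simp add: l2_iff)
  show "n2 z = (\<Sum>i<n. (cmod (z i))\<^sup>2)" unfolding n2_def using h by (rule infsumI)
qed

lemma inner_fin_nat:
  fixes z u :: "nat \<Rightarrow> complex"
  assumes z: "\<And>i. i \<ge> n \<Longrightarrow> z i = 0" and u: "\<And>i. i \<ge> n \<Longrightarrow> u i = 0"
  shows "cmod (\<Sum>i<n. cnj (z i) * u i) \<le> l2_norm z * l2_norm u"
proof -
  have e: "(\<Sum>i<n. cnj (z i) * u i) = infsum (\<lambda>i. cnj (z i) * u i) UNIV"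
    by (rule infsumI[symmetric], rule has_sum_finite_neutralI) (use z in \<open>auto simp: not_less\<close>)
  have zc: "(\<lambda>i. cnj (z i)) \<in> l2" using n2_fin_nat(1)[of n "\<lambda>i. cnj (z i)"] z by simp
  have nz: "l2_norm (\<lambda>i. cnj (z i)) = l2_norm z" by (simp add: l2_norm_def)
  show ?thesis unfolding e using l2_prod(2)[OF zc n2_fin_nat(1)[of n u, OF u]] nz by simp
qed

lemma dual_bound:
  fixes z :: "nat \<Rightarrow> complex"
  assumes z: "\<And>i. i \<ge> n \<Longrightarrow> z i = 0" and b: "cmod (\<Sum>i<n. cnj (z i) * z i) \<le> l2_norm z * R" and R: "R \<ge> 0"
  shows "l2_norm z \<le> R"
proof -
  have "cnj (z i) * z i = complex_of_real ((cmod (z i))\<^sup>2)" for i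
    by (metis complex_norm_square mult.commute)
  then have "(\<Sum>i<n. cnj (z i) * z i) = (\<Sum>i<n. complex_of_real ((cmod (z i))\<^sup>2))"
    by (intro sum.cong) auto
  also have "\<dots> = complex_of_real (\<Sum>i<n. (cmod (z i))\<^sup>2)" by (rule of_real_sum[symmetric])
  finally have "cmod (\<Sum>i<n. cnj (z i) * z i) = \<bar>\<Sum>i<n. (cmod (z i))\<^sup>2\<bar>"
    by (simp only: norm_of_real)
  also have "\<dots> = (\<Sum>i<n. (cmod (z i))\<^sup>2)" by (rule abs_of_nonneg) (simp add: sum_nonneg)
  also have "\<dots> = (l2_norm z)\<^sup>2" using n2_fin_nat(2)[OF z] by (simp add: l2_norm_sq)
  finally have "(l2_norm z)\<^sup>2 \<le> l2_norm z * R" using b by simp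
  then have h: "l2_norm z * l2_norm z \<le> l2_norm z * R" by (simp add: power2_eq_square)
  show ?thesis
  proof (cases "l2_norm z = 0")
    case True then show ?thesis using R by simp
  next
    case False
    then have "l2_norm z > 0" using l2_norm_nonneg[of z] by linarith
    then show ?thesis using h by (simp add: mult_le_cancel_left_pos)
  qed
qed

lemma sum_prod_le:
  fixes f :: "'a \<times> nat \<Rightarrow> real"
  assumes P: "finite P" and f0: "\<And>p. f p \<ge> 0" and fz: "\<And>g i. i \<ge> m \<Longrightarrow> f (g, i) = 0"
  shows "sum f P \<le> (\<Sum>g\<in>fst ` P. \<Sum>i<m. f (g, i))"
proof -
  have "sum f P = sum f (P \<inter> (fst ` P \<times> {..<m}))"
  proof (rule sum.mono_neutral_right[OF P])
    show "\<forall>p\<in>P - P \<inter> (fst ` P \<times> {..<m}). f p = 0"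
    proof
      fix p assume "p \<in> P - P \<inter> (fst ` P \<times> {..<m})"
      then have "snd p \<ge> m" by (cases p) force
      then show "f p = 0" using fz[of m] by (cases p) (simp add: fz)
    qed
  qed auto
  also have "\<dots> \<le> sum f (fst ` P \<times> {..<m})" by (rule sum_mono2) (use P f0 in auto)
  also have "\<dots> = (\<Sum>g\<in>fst ` P. \<Sum>i<m. f (g, i))" by (rule sum.cartesian_product')
  finally show ?thesis .
qed

lemma sect:
  fixes F :: "'a \<times> 'b \<Rightarrow> complex"
  assumes F: "F \<in> l2" and J: "finite J"
  shows "(\<lambda>h. \<Sum>j\<in>J. (cmod (F (h,j)))\<^sup>2) summable_on UNIV"
    "infsum (\<lambda>h. \<Sum>j\<in>J. (cmod (F (h,j)))\<^sup>2) UNIV \<le> n2 F"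
proof -
  have fin: "sum (\<lambda>h. \<Sum>j\<in>J. (cmod (F (h,j)))\<^sup>2) H \<le> n2 F" if H: "finite H" for H
  proof -
    have "sum (\<lambda>h. \<Sum>j\<in>J. (cmod (F (h,j)))\<^sup>2) H = (\<Sum>p\<in>H \<times> J. (cmod (F p))\<^sup>2)"
      by (rule sum.cartesian_product'[symmetric])
    also have "\<dots> \<le> n2 F" by (rule l2_fin_le[OF F]) (use H J in auto)
    finally show ?thesis .
  qed
  have a: "\<And>x. x \<in> UNIV \<Longrightarrow> 0 \<le> (\<Sum>j\<in>J. (cmod (F (x,j)))\<^sup>2)" by (simp add: sum_nonneg)
  have b: "\<And>H. finite H \<Longrightarrow> H \<subseteq> UNIV \<Longrightarrow> sum (\<lambda>h. \<Sum>j\<in>J. (cmod (F (h,j)))\<^sup>2) H \<le> n2 F"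
    using fin by blast
  note r = nonneg_fin_bound[of UNIV "\<lambda>h. \<Sum>j\<in>J. (cmod (F (h,j)))\<^sup>2" "n2 F", OF a b]
  show "(\<lambda>h. \<Sum>j\<in>J. (cmod (F (h,j)))\<^sup>2) summable_on UNIV" by (rule r(1))
  show "infsum (\<lambda>h. \<Sum>j\<in>J. (cmod (F (h,j)))\<^sup>2) UNIV \<le> n2 F" by (rule r(2))
qed

lemma sect_l2:
  fixes F :: "'a \<times> 'b \<Rightarrow> complex"
  assumes F: "F \<in> l2" shows "(\<lambda>h. F (h, j)) \<in> l2"
  using sect(1)[OF F, of "{j}"] by (simp add: l2_iff)

lemma sect_sum:
  fixes F :: "'a \<times> 'b \<Rightarrow> complex"
  assumes F: "F \<in> l2" and J: "finite J"
  shows "(\<Sum>j\<in>J. n2 (\<lambda>h. F (h, j))) \<le> n2 F"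
proof -
  have s: "(\<lambda>h. (cmod (F (h, j)))\<^sup>2) summable_on UNIV" for j using sect_l2[OF F] by (simp add: l2_iff)
  have "(\<Sum>j\<in>J. n2 (\<lambda>h. F (h, j))) = infsum (\<lambda>h. \<Sum>j\<in>J. (cmod (F (h,j)))\<^sup>2) UNIV"
    unfolding n2_def by (rule infsum_fsum(2)[symmetric, OF J s])
  also have "\<dots> \<le> n2 F" by (rule sect(2)[OF F J])
  finally show ?thesis .
qed

lemma amp_at: "amp m Y F (g, i) = (if i < m then (\<Sum>j<m. Y i j (\<lambda>h. F (h, j)) g) else 0)"
  by (simp add: amp_def)

lemma amp_hom:
  assumes Y: "\<And>i j. i < m \<Longrightarrow> j < m \<Longrightarrow> bounded_op (Y i j)" and F: "F \<in> l2"
  shows "amp m Y (\<lambda>p. c * F p) = (\<lambda>p. c * amp m Y F p)"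
proof
  fix p :: "'a \<times> nat"
  obtain g i where p: "p = (g, i)" by (cases p)
  have "Y i j (\<lambda>h. c * F (h, j)) g = c * Y i j (\<lambda>h. F (h, j)) g" if "i < m" "j < m" for j
    using bo_scale[OF Y[OF that] sect_l2[OF F, of j], of c] by simp
  then show "amp m Y (\<lambda>p. c * F p) p = c * amp m Y F p"
    unfolding p amp_at by (simp add: sum_distrib_left)
qed

lemma hs_bound:
  fixes f :: "'a \<Rightarrow> complex"
  assumes "(f has_sum a) A" "b summable_on A" "\<And>x. x \<in> A \<Longrightarrow> cmod (f x) \<le> b x"
  shows "cmod a \<le> infsum b A"
proof -
  have s: "(\<lambda>x. cmod (f x)) summable_on A"
    by (rule summable_on_comparison_test[OF assms(2)]) (use assms(3) in auto)
  have "cmod a \<le> infsum (\<lambda>x. cmod (f x)) A"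
    by (rule norm_has_sum_bound[OF has_sum_infsum[OF s] assms(1)])
  also have "\<dots> \<le> infsum b A" by (rule infsum_mono[OF s assms(2)]) (use assms(3) in auto)
  finally show ?thesis .
qed

lemma cs_count:
  fixes b :: "nat \<Rightarrow> real"
  shows "(\<Sum>j<m. b j)\<^sup>2 \<le> real m * (\<Sum>j<m. (b j)\<^sup>2)"
  using Cauchy_Schwarz_ineq_sum[of "\<lambda>_. 1" b "{..<m}"] by simp

lemma amp_bnd:
  fixes Y :: "nat \<Rightarrow> nat \<Rightarrow> 'a op"
  assumes Y: "\<And>i j. i < m \<Longrightarrow> j < m \<Longrightarrow> bounded_op (Y i j)"
  shows "\<exists>K. \<forall>F\<in>l2. l2_norm (amp m Y F) \<le> K * l2_norm F"
proof -
  have "\<forall>p. \<exists>K. fst p < m \<and> snd p < m \<longrightarrow> K \<ge> 0 \<and> (\<forall>f\<in>l2. l2_norm (Y (fst p) (snd p) f) \<le> K * l2_norm f)"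
  proof
    fix p :: "nat \<times> nat"
    show "\<exists>K. fst p < m \<and> snd p < m \<longrightarrow> K \<ge> 0 \<and> (\<forall>f\<in>l2. l2_norm (Y (fst p) (snd p) f) \<le> K * l2_norm f)"
    proof (cases "fst p < m \<and> snd p < m")
      case True
      obtain K where K: "\<forall>f\<in>l2. l2_norm (Y (fst p) (snd p) f) \<le> K * l2_norm f"
        using bo_bound[OF Y] True by blast
      have "\<forall>f\<in>l2. l2_norm (Y (fst p) (snd p) f) \<le> max K 0 * l2_norm f"
      proof
        fix f :: "'a \<Rightarrow> complex" assume f: "f \<in> l2"
        have "K * l2_norm f \<le> max K 0 * l2_norm f" by (intro mult_right_mono) (auto simp: l2_norm_nonneg)
        then show "l2_norm (Y (fst p) (snd p) f) \<le> max K 0 * l2_norm f" using K f by fastforce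
      qed
      then show ?thesis by (intro exI[of _ "max K 0"]) auto
    qed auto
  qed
  from choice[OF this] obtain Kf where Kf: "\<And>p. fst p < m \<and> snd p < m \<Longrightarrow> Kf p \<ge> 0 \<and> (\<forall>f\<in>l2. l2_norm (Y (fst p) (snd p) f) \<le> Kf p * l2_norm f)"
    by blast
  define Km where "Km = (\<Sum>i<m. \<Sum>j<m. Kf (i,j))"
  have Km: "Kf (i,j) \<le> Km" if "i < m" "j < m" for i j
  proof -
    have "Kf (i,j) \<le> (\<Sum>j<m. Kf (i,j))" by (rule member_le_sum) (use that Kf in auto)
    also have "\<dots> \<le> Km" unfolding Km_def
      by (rule member_le_sum[where f="\<lambda>i. \<Sum>j<m. Kf (i,j)"]) (use that Kf in \<open>auto intro!: sum_nonneg\<close>)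
    finally show ?thesis .
  qed
  have Km0: "Km \<ge> 0" unfolding Km_def using Kf by (auto intro!: sum_nonneg)
  have Yb: "n2 (Y i j f) \<le> Km\<^sup>2 * n2 f" if "i < m" "j < m" "f \<in> l2" for i j f
  proof -
    have "l2_norm (Y i j f) \<le> Kf (i,j) * l2_norm f" using Kf[of "(i,j)"] that by auto
    also have "\<dots> \<le> Km * l2_norm f" using Km[OF that(1,2)] by (intro mult_right_mono) (auto simp: l2_norm_nonneg)
    finally have "(l2_norm (Y i j f))\<^sup>2 \<le> (Km * l2_norm f)\<^sup>2" by (intro power_mono) (auto simp: l2_norm_nonneg)
    then show ?thesis by (simp add: l2_norm_sq power_mult_distrib)
  qed
  have main: "n2 (amp m Y F) \<le> (real m * Km)\<^sup>2 * n2 F" if F: "F \<in> l2" for F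
  proof -
    define T where "T g i j = (cmod (Y i j (\<lambda>h. F (h, j)) g))\<^sup>2" for g i j
    have Fj: "(\<lambda>h. F (h, j)) \<in> l2" for j by (rule sect_l2[OF F])
    have fin: "sum (\<lambda>p. (cmod (amp m Y F p))\<^sup>2) P \<le> (real m * Km)\<^sup>2 * n2 F" if P: "finite P" for P
    proof -
      define G0 where "G0 = fst ` P"
      have G0: "finite G0" unfolding G0_def using P by simp
      have "sum (\<lambda>p. (cmod (amp m Y F p))\<^sup>2) P \<le> (\<Sum>g\<in>G0. \<Sum>i<m. (cmod (amp m Y F (g, i)))\<^sup>2)"
        unfolding G0_def by (rule sum_prod_le[OF P]) (auto simp: amp_at)
      also have "\<dots> \<le> (\<Sum>g\<in>G0. \<Sum>i<m. real m * (\<Sum>j<m. T g i j))"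
      proof (intro sum_mono)
        fix g i assume "i \<in> {..<m}"
        then have "(cmod (amp m Y F (g, i)))\<^sup>2 = (cmod (\<Sum>j<m. Y i j (\<lambda>h. F (h, j)) g))\<^sup>2"
          by (simp add: amp_at)
        also have "\<dots> \<le> (\<Sum>j<m. cmod (Y i j (\<lambda>h. F (h, j)) g))\<^sup>2"
          by (intro power_mono norm_sum) auto
        also have "\<dots> \<le> real m * (\<Sum>j<m. T g i j)" unfolding T_def by (rule cs_count)
        finally show "(cmod (amp m Y F (g, i)))\<^sup>2 \<le> real m * (\<Sum>j<m. T g i j)" .
      qed
      also have "\<dots> = real m * (\<Sum>i<m. \<Sum>j<m. \<Sum>g\<in>G0. T g i j)"
      proof -
        have "(\<Sum>g\<in>G0. \<Sum>i<m. real m * (\<Sum>j<m. T g i j)) = real m * (\<Sum>g\<in>G0. \<Sum>i<m. \<Sum>j<m. T g i j)"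
          by (simp add: sum_distrib_left)
        also have "(\<Sum>g\<in>G0. \<Sum>i<m. \<Sum>j<m. T g i j) = (\<Sum>i<m. \<Sum>g\<in>G0. \<Sum>j<m. T g i j)"
          by (rule sum.swap)
        also have "\<dots> = (\<Sum>i<m. \<Sum>j<m. \<Sum>g\<in>G0. T g i j)"
          by (intro sum.cong refl sum.swap)
        finally show ?thesis by simp
      qed
      also have "\<dots> \<le> real m * (\<Sum>i<m. \<Sum>j<m. Km\<^sup>2 * n2 (\<lambda>h. F (h, j)))"
      proof (intro mult_left_mono sum_mono)
        fix i j assume ij: "i \<in> {..<m}" "j \<in> {..<m}"
        have "(\<Sum>g\<in>G0. T g i j) \<le> n2 (Y i j (\<lambda>h. F (h, j)))"
          unfolding T_def by (rule l2_fin_le[OF bo_l2[OF Y Fj] G0]) (use ij in auto)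
        also have "\<dots> \<le> Km\<^sup>2 * n2 (\<lambda>h. F (h, j))" by (rule Yb) (use ij Fj in auto)
        finally show "(\<Sum>g\<in>G0. T g i j) \<le> Km\<^sup>2 * n2 (\<lambda>h. F (h, j))" .
      qed simp
      also have "\<dots> = real m * (real m * (Km\<^sup>2 * (\<Sum>j<m. n2 (\<lambda>h. F (h, j)))))"
        by (simp add: sum_distrib_left)
      also have "\<dots> \<le> real m * (real m * (Km\<^sup>2 * n2 F))"
        by (intro mult_left_mono sect_sum[OF F]) auto
      also have "\<dots> = (real m * Km)\<^sup>2 * n2 F" by (simp add: power2_eq_square)
      finally show ?thesis .
    qed
    have r: "infsum (\<lambda>p. (cmod (amp m Y F p))\<^sup>2) UNIV \<le> (real m * Km)\<^sup>2 * n2 F"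
      by (rule nonneg_fin_bound(2)) (use fin in auto)
    then show ?thesis by (simp add: n2_def)
  qed
  show ?thesis
  proof (intro exI[of _ "real m * Km"] ballI)
    fix F :: "'a \<times> nat \<Rightarrow> complex" assume F: "F \<in> l2"
    show "l2_norm (amp m Y F) \<le> real m * Km * l2_norm F"
    proof (subst l2_norm_le_iff_n2)
      show "0 \<le> real m * Km * l2_norm F" using Km0 by (simp add: l2_norm_nonneg)
      show "n2 (amp m Y F) \<le> (real m * Km * l2_norm F)\<^sup>2"
        using main[OF F] by (simp add: power_mult_distrib l2_norm_sq)
    qed
  qed
qed

lemma amp_conv_bound:
  fixes Y :: "nat \<Rightarrow> nat \<Rightarrow> 'g::group_add op" and A :: "'g \<Rightarrow> nat \<Rightarrow> nat \<Rightarrow> complex"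
  assumes Y: "\<And>i j. i < n \<Longrightarrow> j < n \<Longrightarrow> Y i j \<in> VN"
    and coef: "\<And>i j s. i < n \<Longrightarrow> j < n \<Longrightarrow> Y i j (dlt 0) s = complex_of_real (w s) * A s i j"
    and w0: "\<And>s. w s \<ge> 0" and ws: "w summable_on UNIV"
    and Ab: "\<And>s v. v \<in> l2 \<Longrightarrow> l2_norm (\<lambda>i. if i < n then \<Sum>j<n. A s i j * v j else 0) \<le> L * l2_norm v"
    and L: "L \<ge> 0"
  shows "mat_norm n Y \<le> infsum w UNIV * L"
  unfolding mat_norm_def
proof (rule op_norm_le)
  fix F :: "'g \<times> nat \<Rightarrow> complex" assume F: "F \<in> l2" and F1: "l2_norm F \<le> 1"
  define W where "W = infsum w UNIV"
  have W0: "W \<ge> 0" unfolding W_def using w0 by (intro infsum_nonneg) auto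
  define v where "v h = (\<lambda>j. if j < n then F (h, j) else 0)" for h
  define u where "u h = l2_norm (v h)" for h
  have vl2: "v h \<in> l2" for h by (rule n2_fin_nat(1)[of n]) (auto simp: v_def)
  have u2: "(u h)\<^sup>2 = (\<Sum>j<n. (cmod (F (h, j)))\<^sup>2)" for h
  proof -
    have "(u h)\<^sup>2 = n2 (v h)" by (simp add: u_def l2_norm_sq)
    also have "\<dots> = (\<Sum>j<n. (cmod (v h j))\<^sup>2)" by (rule n2_fin_nat(2)) (auto simp: v_def)
    also have "\<dots> = (\<Sum>j<n. (cmod (F (h, j)))\<^sup>2)" by (intro sum.cong) (auto simp: v_def)
    finally show ?thesis .
  qed
  have us: "(\<lambda>h. (u h)\<^sup>2) summable_on UNIV" unfolding u2 by (rule sect(1)[OF F]) simp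
  have usb: "infsum (\<lambda>h. (u h)\<^sup>2) UNIV \<le> n2 F" unfolding u2 by (rule sect(2)[OF F]) simp
  have u0: "u h \<ge> 0" for h by (simp add: u_def l2_norm_nonneg)
  note yg = young[of w u, OF w0 ws u0 us]
  define Phi where "Phi g = infsum (\<lambda>s. w s * u (- s + g)) UNIV" for g
  define M where "M s x = (\<lambda>i. if i < n then \<Sum>j<n. A s i j * x j else 0)" for s x
  have zb: "l2_norm (\<lambda>i. amp n Y F (g, i)) \<le> L * Phi g" for g
  proof -
    define z where "z = (\<lambda>i. amp n Y F (g, i))"
    have z0: "z i = 0" if "i \<ge> n" for i using that by (simp add: z_def amp_at)
    define us where "us s = M s (v (- s + g))" for s
    have hz: "((\<lambda>s. complex_of_real (w s) * us s i) has_sum z i) UNIV" if i: "i < n" for i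
    proof -
      have hj: "((\<lambda>s. complex_of_real (w s) * (A s i j * F (- s + g, j))) has_sum Y i j (\<lambda>h. F (h, j)) g) UNIV"
        if j: "j < n" for j
      proof -
        have "((\<lambda>s. Y i j (dlt 0) s * (\<lambda>h. F (h, j)) (- s + g)) has_sum Y i j (\<lambda>h. F (h, j)) g) UNIV"
          by (rule VN_rep[OF Y[OF i j] sect_l2[OF F]])
        then show ?thesis by (simp add: coef[OF i j] mult.assoc)
      qed
      have "((\<lambda>s. \<Sum>j<n. complex_of_real (w s) * (A s i j * F (- s + g, j))) has_sum (\<Sum>j<n. Y i j (\<lambda>h. F (h, j)) g)) UNIV"
        by (rule has_sum_fsum) (use hj in auto)
      moreover have "(\<Sum>j<n. complex_of_real (w s) * (A s i j * F (- s + g, j))) = complex_of_real (w s) * us s i" for s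
        using i by (simp add: us_def M_def v_def sum_distrib_left)
      moreover have "(\<Sum>j<n. Y i j (\<lambda>h. F (h, j)) g) = z i" using i by (simp add: z_def amp_at)
      ultimately show ?thesis by simp
    qed
    have usb: "l2_norm (us s) \<le> L * u (- s + g)" for s
      unfolding us_def M_def u_def by (rule Ab[OF vl2])
    have us0: "us s i = 0" if "i \<ge> n" for s i using that by (simp add: us_def M_def)
    have hD: "((\<lambda>s. \<Sum>i<n. cnj (z i) * (complex_of_real (w s) * us s i)) has_sum (\<Sum>i<n. cnj (z i) * z i)) UNIV"
      by (rule has_sum_fsum) (auto intro: has_sum_cmult_right hz)
    have "cmod (\<Sum>i<n. cnj (z i) * z i) \<le> infsum (\<lambda>s. l2_norm z * L * (w s * u (- s + g))) UNIV"
    proof (rule hs_bound[OF hD])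
      show "(\<lambda>s. l2_norm z * L * (w s * u (- s + g))) summable_on UNIV"
        by (rule summable_on_cmult_right[OF yg(1)])
      fix s :: 'g
      have e: "(\<Sum>i<n. cnj (z i) * (complex_of_real (w s) * us s i)) = complex_of_real (w s) * (\<Sum>i<n. cnj (z i) * us s i)"
        by (simp add: sum_distrib_left mult.left_commute)
      have "cmod (\<Sum>i<n. cnj (z i) * us s i) \<le> l2_norm z * l2_norm (us s)"
        by (rule inner_fin_nat[OF z0 us0])
      also have "\<dots> \<le> l2_norm z * (L * u (- s + g))"
        by (intro mult_left_mono usb) (simp add: l2_norm_nonneg)
      finally have "w s * cmod (\<Sum>i<n. cnj (z i) * us s i) \<le> w s * (l2_norm z * (L * u (- s + g)))"
        by (intro mult_left_mono w0)
      then show "cmod (\<Sum>i<n. cnj (z i) * (complex_of_real (w s) * us s i)) \<le> l2_norm z * L * (w s * u (- s + g))"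
        unfolding e using w0[of s] by (simp add: norm_mult mult_ac)
    qed
    also have "\<dots> = l2_norm z * (L * Phi g)"
      unfolding Phi_def by (simp add: infsum_cmult_right' mult.assoc)
    finally have "cmod (\<Sum>i<n. cnj (z i) * z i) \<le> l2_norm z * (L * Phi g)" .
    moreover have "Phi g \<ge> 0" unfolding Phi_def using w0 u0 by (intro infsum_nonneg) auto
    ultimately have "l2_norm z \<le> L * Phi g" using L by (intro dual_bound[OF z0]) auto
    then show ?thesis by (simp add: z_def)
  qed
  have zb2: "(\<Sum>i<n. (cmod (amp n Y F (g, i)))\<^sup>2) \<le> L\<^sup>2 * (Phi g)\<^sup>2" for g
  proof -
    have "(\<Sum>i<n. (cmod (amp n Y F (g, i)))\<^sup>2) = (l2_norm (\<lambda>i. amp n Y F (g, i)))\<^sup>2"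
      using n2_fin_nat(2)[of n "\<lambda>i. amp n Y F (g, i)"] by (simp add: amp_at l2_norm_sq)
    also have "\<dots> \<le> (L * Phi g)\<^sup>2" by (intro power_mono zb) (simp add: l2_norm_nonneg)
    finally show ?thesis by (simp add: power_mult_distrib)
  qed
  have Phis: "(\<lambda>g. (Phi g)\<^sup>2) summable_on UNIV" unfolding Phi_def by (rule yg(2))
  have Phib: "infsum (\<lambda>g. (Phi g)\<^sup>2) UNIV \<le> W\<^sup>2 * n2 F"
  proof -
    have "infsum (\<lambda>g. (Phi g)\<^sup>2) UNIV \<le> W\<^sup>2 * infsum (\<lambda>h. (u h)\<^sup>2) UNIV"
      unfolding Phi_def W_def by (rule yg(3))
    also have "\<dots> \<le> W\<^sup>2 * n2 F" by (intro mult_left_mono usb) simp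
    finally show ?thesis .
  qed
  have fin: "sum (\<lambda>p. (cmod (amp n Y F p))\<^sup>2) P \<le> L\<^sup>2 * (W\<^sup>2 * n2 F)" if P: "finite P" for P
  proof -
    have "sum (\<lambda>p. (cmod (amp n Y F p))\<^sup>2) P \<le> (\<Sum>g\<in>fst ` P. \<Sum>i<n. (cmod (amp n Y F (g, i)))\<^sup>2)"
      by (rule sum_prod_le[OF P]) (auto simp: amp_at)
    also have "\<dots> \<le> (\<Sum>g\<in>fst ` P. L\<^sup>2 * (Phi g)\<^sup>2)" by (intro sum_mono zb2)
    also have "\<dots> = L\<^sup>2 * (\<Sum>g\<in>fst ` P. (Phi g)\<^sup>2)" by (simp add: sum_distrib_left)
    also have "(\<Sum>g\<in>fst ` P. (Phi g)\<^sup>2) \<le> infsum (\<lambda>g. (Phi g)\<^sup>2) UNIV"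
      by (rule finite_sum_le_infsum[OF Phis]) (use P in auto)
    then have "L\<^sup>2 * (\<Sum>g\<in>fst ` P. (Phi g)\<^sup>2) \<le> L\<^sup>2 * (W\<^sup>2 * n2 F)"
      using Phib by (intro mult_left_mono) auto
    finally show ?thesis .
  qed
  have "n2 (amp n Y F) \<le> L\<^sup>2 * (W\<^sup>2 * n2 F)"
    unfolding n2_def[of "amp n Y F"] by (rule nonneg_fin_bound(2)) (use fin in auto)
  also have "\<dots> \<le> L\<^sup>2 * (W\<^sup>2 * 1)"
  proof -
    have "n2 F \<le> 1" using F1 l2_norm_le_iff_n2[of 1 F] by simp
    then show ?thesis by (intro mult_left_mono) auto
  qed
  also have "\<dots> = (W * L)\<^sup>2" by (simp add: power_mult_distrib)
  finally show "l2_norm (amp n Y F) \<le> infsum w UNIV * L"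
    using l2_norm_le_iff_n2[of "W * L" "amp n Y F"] W0 L by (simp add: W_def)
qed

definition smat_op :: "nat \<Rightarrow> (nat \<Rightarrow> nat \<Rightarrow> complex) \<Rightarrow> nat op" where
  "smat_op k a = (\<lambda>F i. if i < k then (\<Sum>j<k. a i j * F j) else 0)"

lemma smat_norm_op: "smat_norm k a = op_norm (smat_op k a)"
  by (simp add: smat_norm_def smat_op_def)

lemma smat_hom: "smat_op k a (\<lambda>x. c * F x) = (\<lambda>i. c * smat_op k a F i)"
  by (auto simp: smat_op_def sum_distrib_left mult_ac)

lemma smat_zero: "i \<ge> k \<Longrightarrow> smat_op k a F i = 0"
  by (simp add: smat_op_def)

lemma smat_cong: "(\<And>r c. r < k \<Longrightarrow> c < k \<Longrightarrow> a r c = b r c) \<Longrightarrow> smat_norm k a = smat_norm k b"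
  unfolding smat_norm_def by (rule arg_cong[where f=op_norm]) (auto intro!: ext sum.cong)

lemma mask_norm:
  fixes F :: "nat \<Rightarrow> complex"
  assumes F: "F \<in> l2"
  shows "(\<lambda>j. if j < k then F j else 0) \<in> l2" "l2_norm (\<lambda>j. if j < k then F j else 0) \<le> l2_norm F"
proof -
  show l: "(\<lambda>j. if j < k then F j else 0) \<in> l2" by (rule n2_fin_nat(1)[of k]) auto
  have "n2 (\<lambda>j. if j < k then F j else 0) = (\<Sum>j<k. (cmod (F j))\<^sup>2)"
    using n2_fin_nat(2)[of k "\<lambda>j. if j < k then F j else 0"] by simp
  also have "\<dots> \<le> n2 F" by (rule l2_fin_le[OF F]) simp
  finally show "l2_norm (\<lambda>j. if j < k then F j else 0) \<le> l2_norm F"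
    unfolding l2_norm_n2 by (rule real_sqrt_le_mono)
qed

lemma smat_bnd: "\<exists>K. \<forall>F\<in>l2. l2_norm (smat_op k a F) \<le> K * l2_norm F"
proof (intro exI ballI)
  fix F :: "nat \<Rightarrow> complex" assume F: "F \<in> l2"
  define K where "K = (\<Sum>i<k. \<Sum>j<k. cmod (a i j))"
  have K0: "K \<ge> 0" unfolding K_def by (auto intro!: sum_nonneg)
  have pt: "cmod (smat_op k a F i) \<le> K * l2_norm F" for i
  proof (cases "i < k")
    case True
    have "cmod (smat_op k a F i) \<le> (\<Sum>j<k. cmod (a i j * F j))" using True by (simp add: smat_op_def norm_sum)
    also have "\<dots> \<le> (\<Sum>j<k. cmod (a i j) * l2_norm F)"
      by (intro sum_mono) (simp add: norm_mult mult_left_mono l2_point[OF F])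
    also have "\<dots> = (\<Sum>j<k. cmod (a i j)) * l2_norm F" by (simp add: sum_distrib_right)
    also have "(\<Sum>j<k. cmod (a i j)) \<le> K" unfolding K_def
      by (rule member_le_sum[where f="\<lambda>i. \<Sum>j<k. cmod (a i j)"]) (use True in \<open>auto intro!: sum_nonneg\<close>)
    then have "(\<Sum>j<k. cmod (a i j)) * l2_norm F \<le> K * l2_norm F"
      by (intro mult_right_mono) (auto simp: l2_norm_nonneg)
    finally show ?thesis .
  qed (simp add: smat_op_def K0 l2_norm_nonneg)
  have "n2 (smat_op k a F) = (\<Sum>i<k. (cmod (smat_op k a F i))\<^sup>2)"
    by (rule n2_fin_nat(2)) (simp add: smat_zero)
  also have "\<dots> \<le> (\<Sum>i<k. (K * l2_norm F)\<^sup>2)"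
    by (intro sum_mono power_mono pt) simp
  also have "\<dots> = (sqrt (real k) * K * l2_norm F)\<^sup>2"
    by (simp add: power_mult_distrib)
  finally show "l2_norm (smat_op k a F) \<le> sqrt (real k) * K * l2_norm F"
    using l2_norm_le_iff_n2[of "sqrt (real k) * K * l2_norm F" "smat_op k a F"] K0
    by (simp add: l2_norm_nonneg)
qed

lemma smat_apply_le: "F \<in> l2 \<Longrightarrow> l2_norm (smat_op k a F) \<le> smat_norm k a * l2_norm F"
proof -
  assume F: "F \<in> l2"
  obtain K where K: "\<forall>F\<in>l2. l2_norm (smat_op k a F) \<le> K * l2_norm F" using smat_bnd by blast
  show ?thesis unfolding smat_norm_op
    by (rule op_norm_ge[where K=K]) (use K F smat_hom in auto)
qed

lemma smat_bilinear:
  assumes B: "B \<ge> 0"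
    and bil: "\<And>p q. (\<And>i. i \<ge> k \<Longrightarrow> p i = 0) \<Longrightarrow> (\<And>i. i \<ge> k \<Longrightarrow> q i = 0) \<Longrightarrow>
       cmod (\<Sum>r<k. \<Sum>c<k. cnj (p r) * a r c * q c) \<le> B * l2_norm p * l2_norm q"
  shows "smat_norm k a \<le> B"
  unfolding smat_norm_op
proof (rule op_norm_le)
  fix F :: "nat \<Rightarrow> complex" assume F: "F \<in> l2" and F1: "l2_norm F \<le> 1"
  define z where "z = smat_op k a F"
  define v where "v = (\<lambda>j. if j < k then F j else 0)"
  have z0: "z i = 0" if "i \<ge> k" for i using that by (simp add: z_def smat_zero)
  have v0: "v i = 0" if "i \<ge> k" for i using that by (simp add: v_def)
  have vn: "l2_norm v \<le> 1" using mask_norm(2)[OF F, of k] F1 by (simp add: v_def)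
  have "(\<Sum>i<k. cnj (z i) * z i) = (\<Sum>r<k. \<Sum>c<k. cnj (z r) * a r c * v c)"
    by (intro sum.cong refl) (simp add: z_def smat_op_def v_def sum_distrib_left mult.assoc)
  then have "cmod (\<Sum>i<k. cnj (z i) * z i) \<le> B * l2_norm z * l2_norm v"
    using bil[OF z0 v0] by simp
  also have "\<dots> \<le> B * l2_norm z * 1"
    by (intro mult_left_mono vn) (auto simp: B l2_norm_nonneg)
  finally have "cmod (\<Sum>i<k. cnj (z i) * z i) \<le> l2_norm z * B"
    using mult.commute[of B "l2_norm z"] by simp
  then show "l2_norm (smat_op k a F) \<le> B" using dual_bound[OF z0 _ B] by (simp add: z_def)
qed

lemma sum_lessThan_add: "(\<Sum>r<a + b. f r) = (\<Sum>r<a. f r) + (\<Sum>i<b. f (a + i))" for f :: "nat \<Rightarrow> 'b::comm_monoid_add"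
  by (induction b) (simp_all add: add.assoc)

lemma sum_div_mod: "(\<Sum>r<m * n. f r) = (\<Sum>k<m. \<Sum>i<n. f (k * n + i))" for f :: "nat \<Rightarrow> 'b::comm_monoid_add"
proof (induction m)
  case 0 then show ?case by simp
next
  case (Suc m)
  have "(\<Sum>r<Suc m * n. f r) = (\<Sum>r<m * n + n. f r)" by (simp add: add.commute)
  also have "\<dots> = (\<Sum>r<m * n. f r) + (\<Sum>i<n. f (m * n + i))" by (rule sum_lessThan_add)
  finally show ?case using Suc by simp
qed

lemma cs_sqrt:
  fixes a b :: "'a \<Rightarrow> real"
  assumes "\<And>i. a i \<ge> 0" "\<And>i. b i \<ge> 0"
  shows "(\<Sum>i\<in>I. a i * b i) \<le> sqrt (\<Sum>i\<in>I. (a i)\<^sup>2) * sqrt (\<Sum>i\<in>I. (b i)\<^sup>2)"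
proof -
  have "(\<Sum>i\<in>I. a i * b i)\<^sup>2 \<le> (\<Sum>i\<in>I. (a i)\<^sup>2) * (\<Sum>i\<in>I. (b i)\<^sup>2)"
    by (rule Cauchy_Schwarz_ineq_sum)
  then have "sqrt ((\<Sum>i\<in>I. a i * b i)\<^sup>2) \<le> sqrt ((\<Sum>i\<in>I. (a i)\<^sup>2) * (\<Sum>i\<in>I. (b i)\<^sup>2))"
    by (rule real_sqrt_le_mono)
  moreover have "(\<Sum>i\<in>I. a i * b i) \<ge> 0" using assms by (intro sum_nonneg) auto
  ultimately show ?thesis by (simp add: real_sqrt_mult)
qed

lemma sect_to_l2:
  fixes F :: "'a \<times> nat \<Rightarrow> complex"
  assumes z: "\<And>g i. i \<ge> m \<Longrightarrow> F (g, i) = 0" and s: "\<And>i. i < m \<Longrightarrow> (\<lambda>h. F (h, i)) \<in> l2"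
  shows "F \<in> l2"
proof -
  have fin: "sum (\<lambda>p. (cmod (F p))\<^sup>2) P \<le> (\<Sum>i<m. n2 (\<lambda>h. F (h, i)))" if P: "finite P" for P
  proof -
    have "sum (\<lambda>p. (cmod (F p))\<^sup>2) P \<le> (\<Sum>g\<in>fst ` P. \<Sum>i<m. (cmod (F (g, i)))\<^sup>2)"
      by (rule sum_prod_le[OF P]) (auto simp: z)
    also have "\<dots> = (\<Sum>i<m. \<Sum>g\<in>fst ` P. (cmod (F (g, i)))\<^sup>2)" by (rule sum.swap)
    also have "\<dots> \<le> (\<Sum>i<m. n2 (\<lambda>h. F (h, i)))"
      by (intro sum_mono l2_fin_le s) (use P in auto)
    finally show ?thesis .
  qed
  show ?thesis unfolding l2_iff by (rule nonneg_fin_bound(1)) (use fin in auto)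
qed

lemma amp_l2:
  assumes Y: "\<And>i j. i < m \<Longrightarrow> j < m \<Longrightarrow> bounded_op (Y i j)" and F: "F \<in> l2"
  shows "amp m Y F \<in> l2"
proof (rule sect_to_l2[of m])
  fix i assume i: "i < m"
  have "(\<lambda>g. \<Sum>j<m. 1 * Y i j (\<lambda>h. F (h, j)) g) \<in> l2"
  proof (rule l2_sum)
    fix j assume "j \<in> {..<m}"
    then show "Y i j (\<lambda>h. F (h, j)) \<in> l2" using bo_l2[OF Y[OF i] sect_l2[OF F]] by simp
  qed simp
  then show "(\<lambda>h. amp m Y F (h, i)) \<in> l2" using i by (simp add: amp_at)
qed (simp add: amp_at)

lemma VN_dlt: "x \<in> VN \<Longrightarrow> x (dlt u) = (\<lambda>y. x (dlt 0) (y + - u))"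
proof -
  assume x: "x \<in> VN"
  have "x (dlt u) = x (rho (- u) (dlt 0))" by (simp only: dlt_rho[of u])
  also have "\<dots> = rho (- u) (x (dlt 0))" by (rule VN_rho[OF x l2_dlt(1)])
  finally show ?thesis by (simp add: rho_def)
qed

lemma uminus_bij: "bij (uminus :: 'g::group_add \<Rightarrow> 'g)"
  by (rule o_bij[where g=uminus]) (auto simp: fun_eq_iff)

lemma core_inner:
  fixes x :: "'g::group_add op" and Y :: "nat \<Rightarrow> nat \<Rightarrow> 'g op" and \<alpha> \<beta> :: "nat \<Rightarrow> complex"
  assumes x: "x \<in> VN" and Y: "\<And>k l. k < m \<Longrightarrow> l < m \<Longrightarrow> Y k l \<in> VN"
    and Yn: "mat_norm m (\<lambda>k l. Y l k) \<le> 1"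
  shows "cmod (\<Sum>k<m. \<Sum>l<m. cnj (\<alpha> k) * tau (x \<circ> Y k l) * \<beta> l)
     \<le> l2_norm (x (dlt 0)) * sqrt (\<Sum>k<m. (cmod (\<alpha> k))\<^sup>2) * sqrt (\<Sum>l<m. (cmod (\<beta> l))\<^sup>2)"
proof -
  define a where "a = x (dlt 0)"
  have al2: "a \<in> l2" unfolding a_def by (rule bo_l2[OF VN_bo[OF x] l2_dlt(1)])
  define b where "b k l = Y k l (dlt 0)" for k l
  have bl2: "b k l \<in> l2" if "k < m" "l < m" for k l
    unfolding b_def by (rule bo_l2[OF VN_bo[OF Y[OF that]] l2_dlt(1)])
  have tau_hs: "((\<lambda>s. a s * b k l (- s)) has_sum tau (x \<circ> Y k l)) UNIV" if kl: "k < m" "l < m" for k l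
  proof -
    have "((\<lambda>s. x (dlt 0) s * b k l (- s + 0)) has_sum x (b k l) 0) UNIV"
      by (rule VN_rep[OF x bl2[OF kl]])
    moreover have "tau (x \<circ> Y k l) = x (b k l) 0" by (simp add: tau_def b_def delta_e_dlt)
    ultimately show ?thesis by (simp add: a_def)
  qed
  define Psi where "Psi = (\<lambda>p::'g \<times> nat. if snd p < m then cnj (\<alpha> (snd p)) * dlt 0 (fst p) else 0)"
  have Psi_hs: "((\<lambda>p. (cmod (Psi p))\<^sup>2) has_sum (\<Sum>k<m. (cmod (\<alpha> k))\<^sup>2)) UNIV"
  proof (rule has_sum_finite_neutralI[of "{0} \<times> {..<m}"])
    show "(\<Sum>k<m. (cmod (\<alpha> k))\<^sup>2) = (\<Sum>p\<in>{0} \<times> {..<m}. (cmod (Psi p))\<^sup>2)"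
      by (simp add: sum.cartesian_product' Psi_def dlt_def)
  qed (auto simp: Psi_def dlt_def)
  have Psi_l2: "Psi \<in> l2" using has_sum_imp_summable[OF Psi_hs] by (simp add: l2_iff)
  have Psi_n: "l2_norm Psi = sqrt (\<Sum>k<m. (cmod (\<alpha> k))\<^sup>2)"
    using infsumI[OF Psi_hs] by (simp add: l2_norm_def)
  define YT where "YT = (\<lambda>k l. Y l k)"
  have YTb: "bounded_op (YT i j)" if "i < m" "j < m" for i j
    unfolding YT_def by (rule VN_bo[OF Y]) (use that in auto)
  define Z where "Z = amp m YT Psi"
  have Zl2: "Z \<in> l2" unfolding Z_def by (rule amp_l2[of m YT, OF YTb Psi_l2])
  have Zeq: "Z (h, l) = (\<Sum>k<m. cnj (\<alpha> k) * b k l h)" if l: "l < m" for h l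
  proof -
    have "Z (h, l) = (\<Sum>k<m. Y k l (\<lambda>h. Psi (h, k)) h)" using l by (simp add: Z_def amp_at YT_def)
    also have "\<dots> = (\<Sum>k<m. cnj (\<alpha> k) * b k l h)"
    proof (rule sum.cong[OF refl])
      fix k assume k: "k \<in> {..<m}"
      have "(\<lambda>h. Psi (h, k)) = (\<lambda>h. cnj (\<alpha> k) * dlt 0 h)" using k by (simp add: Psi_def)
      then show "Y k l (\<lambda>h. Psi (h, k)) h = cnj (\<alpha> k) * b k l h"
        using bo_scale[OF VN_bo[OF Y] l2_dlt(1), of k l "cnj (\<alpha> k)" 0] k l by (simp add: b_def)
    qed
    finally show ?thesis .
  qed
  have Zn: "l2_norm Z \<le> l2_norm Psi"
  proof -
    obtain K where K: "\<forall>F\<in>l2. l2_norm (amp m YT F) \<le> K * l2_norm F" using amp_bnd[of m YT, OF YTb] by blast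
    have "l2_norm Z \<le> op_norm (amp m YT) * l2_norm Psi"
      unfolding Z_def by (rule op_norm_ge[where K=K]) (use K Psi_l2 amp_hom[of m YT, OF YTb] in auto)
    also have "\<dots> \<le> 1 * l2_norm Psi"
      using Yn by (intro mult_right_mono) (auto simp: mat_norm_def YT_def l2_norm_nonneg)
    finally show ?thesis by simp
  qed
  define T where "T l = (\<Sum>k<m. cnj (\<alpha> k) * tau (x \<circ> Y k l))" for l
  have Zs: "(\<lambda>h. Z (h, l)) \<in> l2" for l by (rule sect_l2[OF Zl2])
  have Zsm: "(\<lambda>s. Z (- s, l)) \<in> l2" "l2_norm (\<lambda>s. Z (- s, l)) = l2_norm (\<lambda>h. Z (h, l))" for l
    using l2_bij[OF uminus_bij Zs[of l]] by auto
  have Tb: "cmod (T l) \<le> l2_norm a * l2_norm (\<lambda>h. Z (h, l))" if l: "l < m" for l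
  proof -
    have "((\<lambda>s. \<Sum>k<m. cnj (\<alpha> k) * (a s * b k l (- s))) has_sum T l) UNIV"
      unfolding T_def by (rule has_sum_fsum) (use tau_hs l in \<open>auto intro: has_sum_cmult_right\<close>)
    moreover have "(\<Sum>k<m. cnj (\<alpha> k) * (a s * b k l (- s))) = a s * Z (- s, l)" for s
      using l by (simp add: Zeq sum_distrib_left mult_ac)
    ultimately have "T l = infsum (\<lambda>s. a s * Z (- s, l)) UNIV" by (simp add: has_sum_iff)
    then show ?thesis using l2_prod(2)[OF al2 Zsm(1)[of l]] Zsm(2)[of l] by simp
  qed
  have "(\<Sum>k<m. \<Sum>l<m. cnj (\<alpha> k) * tau (x \<circ> Y k l) * \<beta> l) = (\<Sum>l<m. \<Sum>k<m. cnj (\<alpha> k) * tau (x \<circ> Y k l) * \<beta> l)"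
    by (rule sum.swap)
  also have "\<dots> = (\<Sum>l<m. T l * \<beta> l)" unfolding T_def by (simp add: sum_distrib_right)
  finally have e: "(\<Sum>k<m. \<Sum>l<m. cnj (\<alpha> k) * tau (x \<circ> Y k l) * \<beta> l) = (\<Sum>l<m. T l * \<beta> l)" .
  have "cmod (\<Sum>l<m. T l * \<beta> l) \<le> (\<Sum>l<m. cmod (T l * \<beta> l))" by (rule norm_sum)
  also have "\<dots> = (\<Sum>l<m. cmod (T l) * cmod (\<beta> l))" by (simp add: norm_mult)
  also have "\<dots> \<le> (\<Sum>l<m. l2_norm a * (l2_norm (\<lambda>h. Z (h, l)) * cmod (\<beta> l)))"
  proof (rule sum_mono)
    fix l assume "l \<in> {..<m}"
    then have "cmod (T l) * cmod (\<beta> l) \<le> (l2_norm a * l2_norm (\<lambda>h. Z (h, l))) * cmod (\<beta> l)"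
      using Tb by (intro mult_right_mono) auto
    then show "cmod (T l) * cmod (\<beta> l) \<le> l2_norm a * (l2_norm (\<lambda>h. Z (h, l)) * cmod (\<beta> l))"
      by (simp add: mult.assoc)
  qed
  also have "\<dots> = l2_norm a * (\<Sum>l<m. l2_norm (\<lambda>h. Z (h, l)) * cmod (\<beta> l))"
    by (simp add: sum_distrib_left)
  finally have c1: "cmod (\<Sum>l<m. T l * \<beta> l) \<le> l2_norm a * (\<Sum>l<m. l2_norm (\<lambda>h. Z (h, l)) * cmod (\<beta> l))" .
  have c2: "(\<Sum>l<m. l2_norm (\<lambda>h. Z (h, l)) * cmod (\<beta> l)) \<le> sqrt (\<Sum>l<m. (l2_norm (\<lambda>h. Z (h, l)))\<^sup>2) * sqrt (\<Sum>l<m. (cmod (\<beta> l))\<^sup>2)"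
    by (rule cs_sqrt) (auto simp: l2_norm_nonneg)
  have c3: "sqrt (\<Sum>l<m. (l2_norm (\<lambda>h. Z (h, l)))\<^sup>2) \<le> sqrt (\<Sum>k<m. (cmod (\<alpha> k))\<^sup>2)"
  proof -
    have "(\<Sum>l<m. (l2_norm (\<lambda>h. Z (h, l)))\<^sup>2) = (\<Sum>l<m. n2 (\<lambda>h. Z (h, l)))" by (simp add: l2_norm_sq)
    also have "\<dots> \<le> n2 Z" by (rule sect_sum[OF Zl2]) simp
    finally have "sqrt (\<Sum>l<m. (l2_norm (\<lambda>h. Z (h, l)))\<^sup>2) \<le> l2_norm Z"
      unfolding l2_norm_n2 by (rule real_sqrt_le_mono)
    then show ?thesis using Zn Psi_n by linarith
  qed
  have c4: "sqrt (\<Sum>l<m. (l2_norm (\<lambda>h. Z (h, l)))\<^sup>2) * sqrt (\<Sum>l<m. (cmod (\<beta> l))\<^sup>2)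
      \<le> sqrt (\<Sum>k<m. (cmod (\<alpha> k))\<^sup>2) * sqrt (\<Sum>l<m. (cmod (\<beta> l))\<^sup>2)"
    by (rule mult_right_mono[OF c3]) (simp add: sum_nonneg)
  have c5: "l2_norm a * (\<Sum>l<m. l2_norm (\<lambda>h. Z (h, l)) * cmod (\<beta> l))
      \<le> l2_norm a * (sqrt (\<Sum>k<m. (cmod (\<alpha> k))\<^sup>2) * sqrt (\<Sum>l<m. (cmod (\<beta> l))\<^sup>2))"
    by (rule mult_left_mono[OF order_trans[OF c2 c4]]) (simp add: l2_norm_nonneg)
  show ?thesis unfolding e using order_trans[OF c1 c5] by (simp add: a_def mult.assoc)
qed

lemma kn_mod: "i < n \<Longrightarrow> (k * n + i) mod n = (i::nat)"
  by simp

lemma kn_div: "i < n \<Longrightarrow> (k * n + i) div n = (k::nat)"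
  by simp

lemma L1_elem_bound:
  fixes X Y :: "nat \<Rightarrow> nat \<Rightarrow> 'g::group_add op"
  assumes X: "\<And>i j. i < n \<Longrightarrow> j < n \<Longrightarrow> X i j \<in> VN"
    and Y: "\<And>k l. k < m \<Longrightarrow> l < m \<Longrightarrow> Y k l \<in> VN" and Yn: "mat_norm m (\<lambda>k l. Y l k) \<le> 1"
  shows "smat_norm (m * n) (\<lambda>r c. tau (X (r mod n) (c mod n) \<circ> Y (r div n) (c div n)))
     \<le> (\<Sum>i<n. \<Sum>j<n. l2_norm (X i j (dlt 0)))"
proof (rule smat_bilinear)
  show "0 \<le> (\<Sum>i<n. \<Sum>j<n. l2_norm (X i j (dlt 0)))" by (auto intro!: sum_nonneg simp: l2_norm_nonneg)
  fix p q :: "nat \<Rightarrow> complex"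
  assume p0: "\<And>i. i \<ge> m * n \<Longrightarrow> p i = 0" and q0: "\<And>i. i \<ge> m * n \<Longrightarrow> q i = 0"
  define M where "M r c = tau (X (r mod n) (c mod n) \<circ> Y (r div n) (c div n))" for r c
  have pl2: "p \<in> l2" by (rule n2_fin_nat(1)[OF p0])
  have ql2: "q \<in> l2" by (rule n2_fin_nat(1)[OF q0])
  have sub: "sqrt (\<Sum>k<m. (cmod (f (k * n + i)))\<^sup>2) \<le> l2_norm f" if f: "f \<in> l2" and i: "i < n" for f i
  proof -
    have inj: "inj_on (\<lambda>k. k * n + i) {..<m}" using i by (auto intro!: inj_onI)
    have "(\<Sum>k<m. (cmod (f (k * n + i)))\<^sup>2) = (\<Sum>r\<in>(\<lambda>k. k * n + i) ` {..<m}. (cmod (f r))\<^sup>2)"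
      using sum.reindex[OF inj, of "\<lambda>r. (cmod (f r))\<^sup>2"] by simp
    also have "\<dots> \<le> n2 f" by (rule l2_fin_le[OF f]) simp
    finally show ?thesis unfolding l2_norm_n2 by (rule real_sqrt_le_mono)
  qed
  define f where "f k i l j = cnj (p (k * n + i)) * tau (X i j \<circ> Y k l) * q (l * n + j)" for k i l j
  have "(\<Sum>r<m * n. \<Sum>c<m * n. cnj (p r) * M r c * q c) = (\<Sum>k<m. \<Sum>i<n. \<Sum>c<m * n. cnj (p (k * n + i)) * M (k * n + i) c * q c)"
    by (rule sum_div_mod)
  also have "\<dots> = (\<Sum>k<m. \<Sum>i<n. \<Sum>l<m. \<Sum>j<n. f k i l j)"
  proof (rule sum.cong[OF refl], rule sum.cong[OF refl])
    fix k i assume k: "k \<in> {..<m}" and i: "i \<in> {..<n}"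
    have "(\<Sum>c<m * n. cnj (p (k * n + i)) * M (k * n + i) c * q c) = (\<Sum>l<m. \<Sum>j<n. cnj (p (k * n + i)) * M (k * n + i) (l * n + j) * q (l * n + j))"
      by (rule sum_div_mod)
    also have "\<dots> = (\<Sum>l<m. \<Sum>j<n. f k i l j)"
      using i by (intro sum.cong[OF refl]) (simp add: M_def f_def kn_mod kn_div)
    finally show "(\<Sum>c<m * n. cnj (p (k * n + i)) * M (k * n + i) c * q c) = (\<Sum>l<m. \<Sum>j<n. f k i l j)" .
  qed
  also have "\<dots> = (\<Sum>i<n. \<Sum>k<m. \<Sum>l<m. \<Sum>j<n. f k i l j)" by (rule sum.swap)
  also have "\<dots> = (\<Sum>i<n. \<Sum>k<m. \<Sum>j<n. \<Sum>l<m. f k i l j)"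
    by (rule sum.cong[OF refl], rule sum.cong[OF refl], rule sum.swap)
  also have "\<dots> = (\<Sum>i<n. \<Sum>j<n. \<Sum>k<m. \<Sum>l<m. f k i l j)"
    by (rule sum.cong[OF refl], rule sum.swap)
  finally have e: "(\<Sum>r<m * n. \<Sum>c<m * n. cnj (p r) * M r c * q c) = (\<Sum>i<n. \<Sum>j<n. \<Sum>k<m. \<Sum>l<m. f k i l j)" .
  have "cmod (\<Sum>i<n. \<Sum>j<n. \<Sum>k<m. \<Sum>l<m. f k i l j) \<le> (\<Sum>i<n. \<Sum>j<n. cmod (\<Sum>k<m. \<Sum>l<m. f k i l j))"
    by (rule order_trans[OF norm_sum sum_mono[OF norm_sum]])
  also have "\<dots> \<le> (\<Sum>i<n. \<Sum>j<n. l2_norm (X i j (dlt 0)) * l2_norm p * l2_norm q)"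
  proof (intro sum_mono)
    fix i j assume i: "i \<in> {..<n}" and j: "j \<in> {..<n}"
    have "cmod (\<Sum>k<m. \<Sum>l<m. f k i l j) \<le> l2_norm (X i j (dlt 0)) * sqrt (\<Sum>k<m. (cmod (p (k * n + i)))\<^sup>2) * sqrt (\<Sum>l<m. (cmod (q (l * n + j)))\<^sup>2)"
      unfolding f_def by (rule core_inner[OF X Y Yn]) (use i j in auto)
    also have "\<dots> \<le> l2_norm (X i j (dlt 0)) * l2_norm p * l2_norm q"
      using sub[OF pl2, of i] sub[OF ql2, of j] i j
      by (intro mult_mono) (auto simp: l2_norm_nonneg sum_nonneg)
    finally show "cmod (\<Sum>k<m. \<Sum>l<m. f k i l j) \<le> l2_norm (X i j (dlt 0)) * l2_norm p * l2_norm q" .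
  qed
  also have "\<dots> = (\<Sum>i<n. \<Sum>j<n. l2_norm (X i j (dlt 0))) * l2_norm p * l2_norm q"
    by (simp add: sum_distrib_right)
  finally show "cmod (\<Sum>r<m * n. \<Sum>c<m * n. cnj (p r) * tau (X (r mod n) (c mod n) \<circ> Y (r div n) (c div n)) * q c)
     \<le> (\<Sum>i<n. \<Sum>j<n. l2_norm (X i j (dlt 0))) * l2_norm p * l2_norm q"
    using e by (simp add: M_def)
qed

lemma mat1_lam: "mat_norm 1 (\<lambda>k l. lam s) \<le> 1"
  unfolding mat_norm_def
proof (rule op_norm_le)
  fix F :: "'a \<times> nat \<Rightarrow> complex" assume F: "F \<in> l2" and F1: "l2_norm F \<le> 1"
  define F0 where "F0 = (\<lambda>h. F (h, 0))"
  have F0l2: "F0 \<in> l2" unfolding F0_def by (rule sect_l2[OF F])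
  have nF0: "n2 F0 \<le> n2 F" using sect_sum[OF F, of "{0}"] by (simp add: F0_def)
  have nl: "n2 (lam s F0) = n2 F0" using l2_lam(2)[OF F0l2, of s] by (metis l2_norm_sq)
  have fin: "sum (\<lambda>p. (cmod (amp 1 (\<lambda>k l. lam s) F p))\<^sup>2) P \<le> n2 F" if P: "finite P" for P
  proof -
    have "sum (\<lambda>p. (cmod (amp 1 (\<lambda>k l. lam s) F p))\<^sup>2) P \<le> (\<Sum>g\<in>fst ` P. \<Sum>i<1. (cmod (amp 1 (\<lambda>k l. lam s) F (g, i)))\<^sup>2)"
      by (rule sum_prod_le[OF P]) (auto simp: amp_at)
    also have "\<dots> = (\<Sum>g\<in>fst ` P. (cmod (lam s F0 g))\<^sup>2)" by (simp add: amp_at F0_def)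
    also have "\<dots> \<le> n2 (lam s F0)" by (rule l2_fin_le[OF l2_lam(1)[OF F0l2]]) (use P in auto)
    finally show ?thesis using nl nF0 by linarith
  qed
  have "n2 (amp 1 (\<lambda>k l. lam s) F) \<le> n2 F"
    unfolding n2_def[of "amp 1 (\<lambda>k l. lam s) F"] by (rule nonneg_fin_bound(2)) (use fin in auto)
  also have "n2 F \<le> 1" using F1 l2_norm_le_iff_n2[of 1 F] by simp
  finally show "l2_norm (amp 1 (\<lambda>k l. lam s) F) \<le> 1"
    using l2_norm_le_iff_n2[of 1 "amp 1 (\<lambda>k l. lam s) F"] by simp
qed

lemma add_eq0_neg: "((s::'g::group_add) + x = 0) = (x = - s)"
  by (metis add.right_inverse minus_add_cancel add_0_right)

lemma lam_delta: "lam (- s) delta_e = dlt (- s :: 'g::group_add)"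
  by (simp add: lam_def delta_e_def dlt_def fun_eq_iff add_eq0_neg)

lemma L1_lower:
  fixes X :: "nat \<Rightarrow> nat \<Rightarrow> 'g::group_add op"
  assumes X: "\<And>i j. i < n \<Longrightarrow> j < n \<Longrightarrow> X i j \<in> VN"
  shows "smat_norm n (\<lambda>r c. X r c (dlt 0) s) \<le> L1_mat_norm n X"
proof -
  define S where "S = {smat_norm (m * n) (\<lambda>r c. tau (X (r mod n) (c mod n) \<circ> Y (r div n) (c div n))) | m Y.
        (\<forall>k<m. \<forall>l<m. Y k l \<in> VN) \<and> mat_norm m (\<lambda>k l. Y l k) \<le> 1}"
  have L: "L1_mat_norm n X = Sup S" by (simp add: L1_mat_norm_def S_def)
  have bdd: "bdd_above S"
  proof (rule bdd_aboveI[where M="\<Sum>i<n. \<Sum>j<n. l2_norm (X i j (dlt 0))"])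
    fix y assume "y \<in> S"
    then obtain m Y where y: "y = smat_norm (m * n) (\<lambda>r c. tau (X (r mod n) (c mod n) \<circ> Y (r div n) (c div n)))"
      and Y: "\<forall>k<m. \<forall>l<m. Y k l \<in> VN" and Yn: "mat_norm m (\<lambda>k l. Y l k) \<le> 1"
      unfolding S_def by blast
    show "y \<le> (\<Sum>i<n. \<Sum>j<n. l2_norm (X i j (dlt 0)))"
      unfolding y by (rule L1_elem_bound[OF X _ Yn]) (use Y in auto)
  qed
  have mem: "smat_norm (1 * n) (\<lambda>r c. tau (X (r mod n) (c mod n) \<circ> (\<lambda>k l. lam (- s)) (r div n) (c div n))) \<in> S"
    unfolding S_def
  proof (rule CollectI, intro exI conjI)
    show "\<forall>k<1. \<forall>l<1. lam (- s) \<in> VN" by (simp add: lam_VN)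
    show "mat_norm 1 (\<lambda>k l. lam (- s)) \<le> 1" by (rule mat1_lam)
  qed (rule refl)
  have eq: "smat_norm (1 * n) (\<lambda>r c. tau (X (r mod n) (c mod n) \<circ> (\<lambda>k l. lam (- s)) (r div n) (c div n)))
      = smat_norm n (\<lambda>r c. X r c (dlt 0) s)"
    unfolding mult_1
  proof (rule smat_cong)
    fix r c assume r: "r < n" and c: "c < n"
    have "tau (X r c \<circ> lam (- s)) = X r c (dlt (- s)) 0" by (simp add: tau_def lam_delta)
    also have "\<dots> = X r c (dlt 0) s" using VN_dlt[OF X[OF r c], of "- s"] by simp
    finally show "tau (X (r mod n) (c mod n) \<circ> lam (- s)) = X r c (dlt 0) s" using r c by simp
  qed
  show ?thesis using cSup_upper[OF mem bdd] eq L by simp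
qed

lemma Ab_bound:
  fixes X :: "nat \<Rightarrow> nat \<Rightarrow> 'g::group_add op"
  assumes X: "\<And>i j. i < n \<Longrightarrow> j < n \<Longrightarrow> X i j \<in> VN" and v: "v \<in> l2"
  shows "l2_norm (\<lambda>i. if i < n then \<Sum>j<n. X i j (dlt 0) s * v j else 0) \<le> L1_mat_norm n X * l2_norm v"
proof -
  have "l2_norm (smat_op n (\<lambda>r c. X r c (dlt 0) s) v) \<le> smat_norm n (\<lambda>r c. X r c (dlt 0) s) * l2_norm v"
    by (rule smat_apply_le[OF v])
  also have "\<dots> \<le> L1_mat_norm n X * l2_norm v"
    by (intro mult_right_mono L1_lower[OF X]) (auto simp: l2_norm_nonneg)
  finally show ?thesis by (simp add: smat_op_def)
qed

lemma summ_pg: "summable (\<lambda>j::nat. (real j + 2)^d * exp (- (real j)\<^sup>2))"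
proof (rule summable_comparison_test'[where N="d + 1"])
  have e1: "norm (exp (- 1 :: real)) < 1" using exp_less_cancel_iff[of "-1::real" 0] by simp
  show "summable (\<lambda>j::nat. (4::real)^d * exp (- 1) ^ j)"
    by (rule summable_mult, rule summable_geometric[OF e1])
  fix j :: nat assume j: "j \<ge> d + 1"
  have e2: "(2::real) \<le> exp 1" using exp_ge_add_one_self[of 1] by simp
  have "real j + 2 \<le> 2 ^ (j + 2)"
  proof -
    have "j + 2 < 2 ^ (j + 2)" by (rule less_exp)
    then have "real (j + 2) \<le> real (2 ^ (j + 2))" by linarith
    then show ?thesis by simp
  qed
  then have a1: "(real j + 2)^d \<le> (2 ^ (j + 2))^d" by (intro power_mono) auto
  have a2: "((2::real) ^ (j + 2))^d = 4^d * (2^j)^d" by (simp add: power_add power_mult_distrib)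
  have e2j: "(2::real)^j \<le> exp 1 ^ j" using e2 by (intro power_mono) auto
  have a3: "4^d * ((2::real)^j)^d \<le> 4^d * (exp 1 ^ j)^d" by (rule mult_left_mono[OF power_mono[OF e2j]]) auto
  have a4: "(exp 1 ^ j)^d = exp (real (j * d))" by (simp add: exp_of_nat_mult[symmetric] power_mult)
  have a: "(real j + 2)^d \<le> 4^d * exp (real (j * d))" using order_trans[OF a1[unfolded a2] a3[unfolded a4]] .

  have "real (j * d) - (real j)\<^sup>2 \<le> - real j"
  proof -
    have "d \<le> j - 1" using j by simp
    then have "j * d \<le> j * (j - 1)" by simp
    then have "real (j * d) \<le> real (j * (j - 1))" by linarith
    also have "\<dots> = (real j)\<^sup>2 - real j" using j by (simp add: power2_eq_square of_nat_diff algebra_simps)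
    finally show ?thesis by simp
  qed
  then have b: "exp (real (j * d)) * exp (- (real j)\<^sup>2) \<le> exp (- 1) ^ j"
    by (simp add: exp_add[symmetric] exp_of_nat_mult[symmetric])
  have "norm ((real j + 2)^d * exp (- (real j)\<^sup>2)) = (real j + 2)^d * exp (- (real j)\<^sup>2)" by simp
  also have "\<dots> \<le> 4^d * exp (real (j * d)) * exp (- (real j)\<^sup>2)" using a by (intro mult_right_mono) auto
  also have "\<dots> \<le> 4^d * exp (- 1) ^ j" using b by (simp add: mult.assoc)
  finally show "norm ((real j + 2)^d * exp (- (real j)\<^sup>2)) \<le> 4^d * exp (- 1) ^ j" .
qed

lemma floor_nat_eq:
  fixes x :: real
  assumes "x \<ge> 0" "nat \<lfloor>x\<rfloor> = j"
  shows "of_int \<lfloor>x\<rfloor> = real j"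
proof -
  have "\<lfloor>x\<rfloor> \<ge> 0" using assms(1) by simp
  then have "int (nat \<lfloor>x\<rfloor>) = \<lfloor>x\<rfloor>" by (rule nat_0_le)
  then have "\<lfloor>x\<rfloor> = int j" using assms(2) by simp
  then show ?thesis by simp
qed

lemma sum_bound:
  fixes r :: "'g \<Rightarrow> real"
  assumes r0: "\<And>s. r s \<ge> 0" and c: "c > 0"
    and cnt: "\<And>R. R \<ge> 0 \<Longrightarrow> finite {s. r s \<le> R} \<and> real (card {s. r s \<le> R}) \<le> c * (1 + R)^d"
  shows "\<exists>C0>0. \<forall>t. 0 < t \<and> t \<le> 1 \<longrightarrow> (\<lambda>s. exp (- t * (r s)\<^sup>2)) summable_on UNIV
            \<and> infsum (\<lambda>s. exp (- t * (r s)\<^sup>2)) UNIV \<le> C0 / t powr (real d / 2)"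
proof -
  define g where "g j = (real j + 2)^d * exp (- (real j)\<^sup>2)" for j :: nat
  have gs: "summable g" unfolding g_def by (rule summ_pg)
  have g0: "g j \<ge> 0" for j by (simp add: g_def)
  define Sinf where "Sinf = suminf g"
  have "sum g {0} \<le> Sinf" unfolding Sinf_def by (rule sum_le_suminf[OF gs]) (auto simp: g0)
  moreover have "sum g {0} = 2^d" by (simp add: g_def)
  moreover have "(0::real) < 2^d" by simp
  ultimately have Sp: "Sinf > 0" by linarith
  show ?thesis
  proof (intro exI[of _ "c * Sinf"] conjI allI impI)
    show "c * Sinf > 0" using c Sp by simp
    fix t :: real assume t: "0 < t \<and> t \<le> 1"
    define \<sigma> where "\<sigma> = sqrt t"
    have \<sigma>: "\<sigma> > 0" "\<sigma> \<le> 1" using t by (auto simp: \<sigma>_def)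
    have \<sigma>d: "\<sigma> ^ d = t powr (real d / 2)"
    proof -
      have "\<sigma> = t powr (1/2)" using t by (simp add: \<sigma>_def powr_half_sqrt)
      then have "\<sigma> ^ d = (t powr (1/2)) powr real d" using \<sigma> by (simp add: powr_realpow)
      also have "\<dots> = t powr (real d / 2)" by (simp add: powr_powr)
      finally show ?thesis .
    qed
    define f where "f s = exp (- t * (r s)\<^sup>2)" for s
    define jf where "jf s = nat \<lfloor>\<sigma> * r s\<rfloor>" for s
    have fin: "sum f F \<le> c * Sinf / t powr (real d / 2)" if F: "finite F" for F
    proof -
      have "sum f F = (\<Sum>j\<in>jf ` F. sum f {s \<in> F. jf s = j})" by (rule sum.image_gen[OF F])
      also have "\<dots> \<le> (\<Sum>j\<in>jf ` F. c / \<sigma>^d * g j)"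
      proof (rule sum_mono)
        fix j assume "j \<in> jf ` F"
        have fb: "f s \<le> exp (- (real j)\<^sup>2)" if "s \<in> {s \<in> F. jf s = j}" for s
        proof -
          have sj: "jf s = j" using that by simp
          have "of_int \<lfloor>\<sigma> * r s\<rfloor> = real j" using sj \<sigma> r0[of s] unfolding jf_def
            by (intro floor_nat_eq) auto
          moreover have "of_int \<lfloor>\<sigma> * r s\<rfloor> \<le> \<sigma> * r s" by (rule of_int_floor_le)
          ultimately have "real j \<le> \<sigma> * r s" by simp
          then have "(real j)\<^sup>2 \<le> (\<sigma> * r s)\<^sup>2" by (intro power_mono) auto
          also have "\<dots> = t * (r s)\<^sup>2" using t by (simp add: \<sigma>_def power_mult_distrib)
          finally show ?thesis unfolding f_def by simp
        qed
        have sub: "{s \<in> F. jf s = j} \<subseteq> {s. r s \<le> (real j + 1) / \<sigma>}"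
        proof
          fix s assume "s \<in> {s \<in> F. jf s = j}"
          then have sj: "jf s = j" by simp
          have "\<sigma> * r s < real j + 1"
          proof -
            have "\<sigma> * r s < of_int \<lfloor>\<sigma> * r s\<rfloor> + 1" by linarith
            moreover have "of_int \<lfloor>\<sigma> * r s\<rfloor> = real j" using sj \<sigma> r0[of s] unfolding jf_def
              by (intro floor_nat_eq) auto
            ultimately show ?thesis by simp
          qed
          then have "r s \<le> (real j + 1) / \<sigma>" using \<sigma> by (simp add: field_simps)
          then show "s \<in> {s. r s \<le> (real j + 1) / \<sigma>}" by simp
        qed
        have R0: "(real j + 1) / \<sigma> \<ge> 0" using \<sigma> by simp
        have cardb: "real (card {s \<in> F. jf s = j}) \<le> c * (1 + (real j + 1) / \<sigma>)^d"
        proof -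
          have "card {s \<in> F. jf s = j} \<le> card {s. r s \<le> (real j + 1) / \<sigma>}"
            by (rule card_mono) (use cnt[OF R0] sub in auto)
          then show ?thesis using cnt[OF R0] by linarith
        qed
        have "1 + (real j + 1) / \<sigma> \<le> (real j + 2) / \<sigma>"
        proof -
          have "1 \<le> 1 / \<sigma>" using \<sigma> by simp
          then show ?thesis by (simp add: add_divide_distrib) 
        qed
        then have "(1 + (real j + 1) / \<sigma>)^d \<le> ((real j + 2) / \<sigma>)^d" by (intro power_mono) (use \<sigma> in auto)
        then have cardb2: "real (card {s \<in> F. jf s = j}) \<le> c * ((real j + 2) / \<sigma>)^d"
          using cardb c by (meson mult_left_mono less_imp_le order_trans)
        have "sum f {s \<in> F. jf s = j} \<le> real (card {s \<in> F. jf s = j}) * exp (- (real j)\<^sup>2)"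
          using sum_bounded_above[of "{s \<in> F. jf s = j}" f "exp (- (real j)\<^sup>2)"] fb by simp
        also have "\<dots> \<le> c * ((real j + 2) / \<sigma>)^d * exp (- (real j)\<^sup>2)"
          by (intro mult_right_mono cardb2) simp
        also have "\<dots> = c / \<sigma>^d * g j" by (simp add: g_def power_divide)
        finally show "sum f {s \<in> F. jf s = j} \<le> c / \<sigma>^d * g j" .
      qed
      also have "\<dots> = c / \<sigma>^d * sum g (jf ` F)" by (simp add: sum_distrib_left)
      also have "\<dots> \<le> c / \<sigma>^d * Sinf" unfolding Sinf_def
        by (intro mult_left_mono sum_le_suminf[OF gs]) (use F c \<sigma> g0 in auto)
      finally show ?thesis using \<sigma>d by simp
    qed
    have f0: "f s \<ge> 0" for s by (simp add: f_def)
    note nb = nonneg_fin_bound[of UNIV f "c * Sinf / t powr (real d / 2)"]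
    show "(\<lambda>s. exp (- t * (r s)\<^sup>2)) summable_on UNIV" using nb fin f0 unfolding f_def by auto
    show "infsum (\<lambda>s. exp (- t * (r s)\<^sup>2)) UNIV \<le> c * Sinf / t powr (real d / 2)"
      using nb fin f0 unfolding f_def by auto
  qed
qed

lemma orth_expand:
  fixes B :: "'h::euclidean_space set"
  assumes orth: "pairwise orthogonal B" and n1: "\<And>e. e \<in> B \<Longrightarrow> norm e = 1" and a: "a \<in> span B"
  shows "(norm a)\<^sup>2 = (\<Sum>e\<in>B. (a \<bullet> e)\<^sup>2)"
proof -
  have bb: "b \<bullet> b = 1" if "b \<in> B" for b using n1[OF that] by (metis power2_norm_eq_inner power_one)
  define r where "r = a - (\<Sum>b\<in>B. (b \<bullet> a / (b \<bullet> b)) *\<^sub>R b)"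
  have r_span: "r \<in> span B" unfolding r_def
    by (intro span_diff a span_sum span_mul span_base)
  have "orthogonal r r" using Gram_Schmidt_step[OF orth r_span, of a] by (simp add: r_def)
  then have r0: "r = 0" by (simp add: orthogonal_def)
  have ae: "a = (\<Sum>b\<in>B. (b \<bullet> a) *\<^sub>R b)"
  proof -
    have "a = (\<Sum>b\<in>B. (b \<bullet> a / (b \<bullet> b)) *\<^sub>R b)" using r0 by (simp add: r_def)
    also have "\<dots> = (\<Sum>b\<in>B. (b \<bullet> a) *\<^sub>R b)" by (intro sum.cong refl) (simp add: bb)
    finally show ?thesis .
  qed
  have "(norm a)\<^sup>2 = a \<bullet> a" by (rule power2_norm_eq_inner)
  also have "\<dots> = a \<bullet> (\<Sum>b\<in>B. (b \<bullet> a) *\<^sub>R b)" by (subst (2) ae) (rule refl)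
  also have "\<dots> = (\<Sum>b\<in>B. (b \<bullet> a) * (a \<bullet> b))" by (simp add: inner_sum_right)
  also have "\<dots> = (\<Sum>e\<in>B. (a \<bullet> e)\<^sup>2)" by (simp add: inner_commute power2_eq_square)
  finally show ?thesis .
qed

lemma floor_eq_close:
  fixes x y \<epsilon> :: real
  assumes "\<lfloor>x / \<epsilon>\<rfloor> = \<lfloor>y / \<epsilon>\<rfloor>" "\<epsilon> > 0"
  shows "(x - y)\<^sup>2 \<le> \<epsilon>\<^sup>2"
proof -
  have "of_int \<lfloor>x / \<epsilon>\<rfloor> \<le> x / \<epsilon>" "x / \<epsilon> < of_int \<lfloor>x / \<epsilon>\<rfloor> + 1"
       "of_int \<lfloor>y / \<epsilon>\<rfloor> \<le> y / \<epsilon>" "y / \<epsilon> < of_int \<lfloor>y / \<epsilon>\<rfloor> + 1" by linarith+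
  then have "\<bar>x / \<epsilon> - y / \<epsilon>\<bar> < 1" using assms(1) by linarith
  then have "\<bar>x - y\<bar> / \<epsilon> < 1" using assms(2) by (simp add: diff_divide_distrib[symmetric])
  then have "\<bar>x - y\<bar> \<le> \<epsilon>" using assms(2) by (simp add: field_simps)
  then have "\<bar>x - y\<bar>\<^sup>2 \<le> \<epsilon>\<^sup>2" by (intro power_mono) auto
  then show ?thesis by simp
qed

lemma count_bound:
  fixes b :: "'g \<Rightarrow> 'h::euclidean_space"
  assumes Bf: "finite B" and Bn: "\<And>e. e \<in> B \<Longrightarrow> norm e = 1"
    and nrm: "\<And>s t. (norm (b s - b t))\<^sup>2 = (\<Sum>e\<in>B. ((b s - b t) \<bullet> e)\<^sup>2)"
    and fibf: "\<And>s0. finite {s. b s = b s0}" and fibc: "\<And>s0. card {s. b s = b s0} \<le> N"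
    and dpos: "\<delta> > 0" and gap: "\<And>s t. b s \<noteq> b t \<Longrightarrow> \<delta> \<le> (norm (b s - b t))\<^sup>2"
  shows "\<exists>c>0. \<forall>R\<ge>0. finite {s. norm (b s) \<le> R} \<and> real (card {s. norm (b s) \<le> R}) \<le> c * (1 + R) ^ card B"
proof -
  define d where "d = card B"
  define \<epsilon> where "\<epsilon> = sqrt (\<delta> / (real d + 1))"
  have \<epsilon>0: "\<epsilon> > 0" using dpos by (simp add: \<epsilon>_def)
  have \<epsilon>2: "\<epsilon>\<^sup>2 = \<delta> / (real d + 1)" using dpos by (simp add: \<epsilon>_def)
  have d\<epsilon>: "real d * \<epsilon>\<^sup>2 < \<delta>"
  proof -
    have "real d * \<epsilon>\<^sup>2 = \<delta> * (real d / (real d + 1))" by (simp add: \<epsilon>2)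
    also have "\<dots> < \<delta> * 1" using dpos by (intro mult_strict_left_mono) auto
    finally show ?thesis by simp
  qed
  define \<kappa> where "\<kappa> v = restrict (\<lambda>e. \<lfloor>(v \<bullet> e) / \<epsilon>\<rfloor>) B" for v
  have kinj: "b s = b t" if k: "\<kappa> (b s) = \<kappa> (b t)" for s t
  proof (rule ccontr)
    assume ne: "b s \<noteq> b t"
    have each: "((b s - b t) \<bullet> e)\<^sup>2 \<le> \<epsilon>\<^sup>2" if e: "e \<in> B" for e
    proof -
      have "\<lfloor>(b s \<bullet> e) / \<epsilon>\<rfloor> = \<lfloor>(b t \<bullet> e) / \<epsilon>\<rfloor>" using fun_cong[OF k, of e] e by (simp add: \<kappa>_def)
      from floor_eq_close[OF this \<epsilon>0] show ?thesis by (simp add: inner_diff_left)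
    qed
    have "(norm (b s - b t))\<^sup>2 \<le> real d * \<epsilon>\<^sup>2"
      unfolding nrm d_def using sum_bounded_above[of B "\<lambda>e. ((b s - b t) \<bullet> e)\<^sup>2" "\<epsilon>\<^sup>2"] each by simp
    then show False using gap[OF ne] d\<epsilon> by linarith
  qed
  define c where "c = (real N + 1) * (2 / \<epsilon> + 3) ^ d"
  have "2 / \<epsilon> + 3 > 0" using \<epsilon>0 by (simp add: add_pos_pos)
  then have c0: "c > 0" unfolding c_def by (intro mult_pos_pos zero_less_power) auto
  show ?thesis
  proof (rule exI[of _ c], rule conjI[OF c0], intro allI impI)
    fix R :: real assume R: "R \<ge> 0"
    define M where "M = \<lceil>R / \<epsilon>\<rceil>"
    have "R / \<epsilon> \<ge> 0" using R \<epsilon>0 by simp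
    then have "(0::real) \<le> of_int M" using le_of_int_ceiling[of "R / \<epsilon>"] unfolding M_def by linarith
    then have M0: "M \<ge> 0" by simp
    define P where "P = (\<Pi>\<^sub>E e\<in>B. {-M..M})"
    define S where "S = {s. norm (b s) \<le> R}"
    have inP: "\<kappa> (b s) \<in> P" if s: "s \<in> S" for s
      unfolding \<kappa>_def P_def restrict_PiE_iff
    proof
      fix e assume e: "e \<in> B"
      have "\<bar>b s \<bullet> e\<bar> \<le> norm (b s) * norm e" by (rule Cauchy_Schwarz_ineq2)
      then have ab: "\<bar>b s \<bullet> e\<bar> \<le> R" using s Bn[OF e] by (simp add: S_def)
      have up: "(b s \<bullet> e) / \<epsilon> \<le> R / \<epsilon>" using ab \<epsilon>0 by (intro divide_right_mono) auto
      have lo: "- (R / \<epsilon>) \<le> (b s \<bullet> e) / \<epsilon>" using ab \<epsilon>0 by (simp add: field_simps)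
      have "\<lfloor>(b s \<bullet> e) / \<epsilon>\<rfloor> \<le> M"
      proof -
        have "of_int \<lfloor>(b s \<bullet> e) / \<epsilon>\<rfloor> \<le> (b s \<bullet> e) / \<epsilon>" by (rule of_int_floor_le)
        also have "\<dots> \<le> of_int M" unfolding M_def using up le_of_int_ceiling order_trans by blast
        finally show ?thesis by linarith
      qed
      moreover have "- M \<le> \<lfloor>(b s \<bullet> e) / \<epsilon>\<rfloor>"
      proof -
        have "\<lfloor>- (R / \<epsilon>)\<rfloor> \<le> \<lfloor>(b s \<bullet> e) / \<epsilon>\<rfloor>" by (rule floor_mono[OF lo])
        then show ?thesis by (simp add: M_def floor_minus)
      qed
      ultimately show "\<lfloor>(b s \<bullet> e) / \<epsilon>\<rfloor> \<in> {-M..M}" by simp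
    qed
    define Fk where "Fk k = {s \<in> S. \<kappa> (b s) = k}" for k
    have Sun: "S = (\<Union>k\<in>P. Fk k)" using inP by (auto simp: Fk_def)
    have Fk: "finite (Fk k) \<and> card (Fk k) \<le> N" for k
    proof (cases "Fk k = {}")
      case True then show ?thesis by simp
    next
      case False
      then obtain s0 where s0: "s0 \<in> Fk k" by blast
      have sub: "Fk k \<subseteq> {s. b s = b s0}" using s0 kinj by (auto simp: Fk_def)
      have "finite (Fk k)" by (rule finite_subset[OF sub fibf])
      moreover have "card (Fk k) \<le> N" using card_mono[OF fibf sub] fibc[of s0] by linarith
      ultimately show ?thesis by simp
    qed
    have Pf: "finite P" unfolding P_def by (rule finite_PiE[OF Bf]) simp
    have Sf: "finite S" unfolding Sun using Pf Fk by blast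
    have "card S \<le> (\<Sum>k\<in>P. card (Fk k))" unfolding Sun by (rule card_UN_le[OF Pf])
    also have "\<dots> \<le> card P * N" using sum_bounded_above[of P "\<lambda>k. card (Fk k)" N] Fk by simp
    finally have cS: "real (card S) \<le> real (card P) * real N" by (metis of_nat_le_iff of_nat_mult)
    have cP: "card P = (nat (2 * M + 1)) ^ d" unfolding P_def d_def using Bf
      by (simp add: card_PiE prod_constant)
    have "real (nat (2 * M + 1)) = 2 * of_int M + 1" using M0 by simp
    also have "\<dots> \<le> 2 * (R / \<epsilon> + 1) + 1"
    proof -
      have "of_int M < R / \<epsilon> + 1" unfolding M_def using ceiling_correct[of "R / \<epsilon>"] by linarith
      then have "2 * of_int M \<le> 2 * (R / \<epsilon> + 1)" by simp
      then show ?thesis by (rule add_right_mono)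
    qed
    also have "\<dots> \<le> (2 / \<epsilon> + 3) * (1 + R)" using R \<epsilon>0 by (simp add: field_simps)
    finally have b1: "real (nat (2 * M + 1)) \<le> (2 / \<epsilon> + 3) * (1 + R)" .
    have "real (card P) \<le> ((2 / \<epsilon> + 3) * (1 + R)) ^ d" unfolding cP
      using b1 by (simp add: power_mono)
    then have "real (card S) \<le> ((2 / \<epsilon> + 3) * (1 + R)) ^ d * real N"
      using cS by (meson mult_right_mono of_nat_0_le_iff order_trans)
    also have "\<dots> \<le> ((2 / \<epsilon> + 3) * (1 + R)) ^ d * (real N + 1)" using R \<epsilon>0 by (intro mult_left_mono) auto
    also have "\<dots> = c * (1 + R) ^ card B" by (simp add: c_def d_def power_mult_distrib)
    finally show "finite {s. norm (b s) \<le> R} \<and> real (card {s. norm (b s) \<le> R}) \<le> c * (1 + R) ^ card B"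
      using Sf by (simp add: S_def)
  qed
qed

lemma smat_norm_nonneg: "smat_norm k a \<ge> 0"
proof -
  have "l2_norm (smat_op k a (dlt 0)) \<le> smat_norm k a * l2_norm (dlt (0::nat))"
    by (rule smat_apply_le[OF l2_dlt(1)])
  then show ?thesis using l2_norm_nonneg[of "smat_op k a (dlt 0)"] by (simp add: l2_dlt(3))
qed

theorem mainTheorem7:
  fixes psi :: "'g::group_add \<Rightarrow> real"
    and H :: "'h::euclidean_space set"
    and pi :: "'g \<Rightarrow> 'h \<Rightarrow> 'h"
    and b :: "'g \<Rightarrow> 'h"
  assumes cnd: "cond_neg_def psi"
    and psi_e: "psi 0 = 0"
    and H: "subspace H"
    and pi_orth: "\<And>s. orth_on H (pi s)"
    and pi_hom: "\<And>s t x. x \<in> H \<Longrightarrow> pi (s + t) x = pi s (pi t x)"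
    and b_H: "\<And>s. b s \<in> H"
    and cocycle: "\<And>s t. b (s + t) = b s + pi s (b t)"
    and psi_b: "\<And>s. psi s = (norm (b s))\<^sup>2"
    and fin_zero: "finite {s. psi s = 0}"
    and gap: "\<exists>\<delta>>0. \<forall>s t. b s \<noteq> b t \<longrightarrow> \<delta> \<le> (norm (b s - b t))\<^sup>2"
  shows "\<exists>C>0. \<forall>t. 0 < t \<and> t \<le> 1 \<longrightarrow>
           (\<forall>n (X :: nat \<Rightarrow> nat \<Rightarrow> 'g op). (\<forall>i<n. \<forall>j<n. X i j \<in> VN) \<longrightarrow>
              mat_norm n (\<lambda>i j. fourier_mult psi t (X i j))
                \<le> C / t powr (real (dim H) / 2) * L1_mat_norm n X)"
proof -
  have b0: "b 0 = 0" using psi_e psi_b[of 0] by simp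
  define N where "N = card {s. psi s = 0}"
  have fib: "finite {s. b s = b s0} \<and> card {s. b s = b s0} \<le> N" for s0
  proof -
    have sub: "{s. b s = b s0} \<subseteq> (\<lambda>k. s0 + k) ` {s. psi s = 0}"
    proof
      fix s assume "s \<in> {s. b s = b s0}"
      then have bs: "b s = b s0" by simp
      have "b (- s0 + s) = b (- s0) + pi (- s0) (b s)" by (rule cocycle)
      also have "\<dots> = b (- s0) + pi (- s0) (b s0)" by (simp add: bs)
      also have "\<dots> = b (- s0 + s0)" by (rule cocycle[symmetric])
      also have "\<dots> = 0" by (simp add: b0)
      finally have "psi (- s0 + s) = 0" by (simp add: psi_b)
      moreover have "s = s0 + (- s0 + s)" by (simp add: add.assoc[symmetric])
      ultimately show "s \<in> (\<lambda>k. s0 + k) ` {s. psi s = 0}" by blast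
    qed
    have "finite {s. b s = b s0}" by (rule finite_subset[OF sub finite_imageI[OF fin_zero]])
    moreover have "card {s. b s = b s0} \<le> N"
      unfolding N_def using card_mono[OF finite_imageI[OF fin_zero] sub] card_image_le[OF fin_zero, of "\<lambda>k. s0 + k"]
      by linarith
    ultimately show ?thesis by simp
  qed
  obtain B where BH: "B \<subseteq> H" and Borth: "pairwise orthogonal B" and Bn: "\<And>x. x \<in> B \<Longrightarrow> norm x = 1"
    and Bi: "independent B" and Bc: "card B = dim H" and Bs: "span B = H"
    using orthonormal_basis_subspace[OF H] by metis
  have Bf: "finite B" by (rule pairwise_orthogonal_imp_finite[OF Borth])
  have nrm: "(norm (b s - b t))\<^sup>2 = (\<Sum>e\<in>B. ((b s - b t) \<bullet> e)\<^sup>2)" for s t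
  proof (rule orth_expand[OF Borth Bn])
    show "b s - b t \<in> span B" unfolding Bs by (rule subspace_diff[OF H b_H b_H])
  qed
  obtain \<delta> where dpos: "\<delta> > 0" and dg: "\<And>s t. b s \<noteq> b t \<Longrightarrow> \<delta> \<le> (norm (b s - b t))\<^sup>2"
    using gap by blast
  obtain c where c: "c > 0" and cnt: "\<And>R. R \<ge> 0 \<Longrightarrow> finite {s. norm (b s) \<le> R} \<and> real (card {s. norm (b s) \<le> R}) \<le> c * (1 + R) ^ card B"
  proof -
    have f1: "\<And>s0. finite {s. b s = b s0}" using fib by blast
    have f2: "\<And>s0. card {s. b s = b s0} \<le> N" using fib by blast
    show ?thesis using count_bound[where N=N, OF Bf Bn nrm f1 f2 dpos dg] that by blast
  qed
  obtain C0 where C0: "C0 > 0" and sb: "\<And>t. 0 < t \<and> t \<le> 1 \<Longrightarrow> (\<lambda>s. exp (- t * (norm (b s))\<^sup>2)) summable_on UNIV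
            \<and> infsum (\<lambda>s. exp (- t * (norm (b s))\<^sup>2)) UNIV \<le> C0 / t powr (real (card B) / 2)"
    using sum_bound[of "\<lambda>s. norm (b s)" c "card B", OF _ c cnt] by auto
  show ?thesis
  proof (intro exI[of _ C0] conjI[OF C0] allI impI)
    fix t :: real and n :: nat and X :: "nat \<Rightarrow> nat \<Rightarrow> 'g op"
    assume t: "0 < t \<and> t \<le> 1" and X: "\<forall>i<n. \<forall>j<n. X i j \<in> VN"
    define w where "w s = exp (- t * psi s)" for s
    have we: "w = (\<lambda>s. exp (- t * (norm (b s))\<^sup>2))" by (simp add: w_def psi_b fun_eq_iff)
    have ws: "w summable_on UNIV" using sb[OF t] we by simp
    have wb: "infsum w UNIV \<le> C0 / t powr (real (dim H) / 2)" using sb[OF t] we Bc by simp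
    have wfun: "(\<lambda>s. exp (- t * psi s)) = w" by (rule ext) (simp add: w_def)
    have phi: "(\<lambda>s. exp (- t * psi s)) summable_on UNIV" unfolding wfun by (rule ws)
    have XV: "X i j \<in> VN" if "i < n" "j < n" for i j using X that by blast
    have L0: "L1_mat_norm n X \<ge> 0"
    proof -
      have "smat_norm n (\<lambda>r c. X r c (dlt 0) 0) \<le> L1_mat_norm n X" by (rule L1_lower[OF XV])
      then show ?thesis using smat_norm_nonneg[of n "\<lambda>r c. X r c (dlt 0) 0"] by linarith
    qed
    have "mat_norm n (\<lambda>i j. fourier_mult psi t (X i j)) \<le> infsum w UNIV * L1_mat_norm n X"
    proof (rule amp_conv_bound[where A="\<lambda>s i j. X i j (dlt 0) s"])
      show "fourier_mult psi t (X i j) \<in> VN" if "i < n" "j < n" for i j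
        by (rule fm_spec(1)[OF XV[OF that] phi])
      show "fourier_mult psi t (X i j) (dlt 0) s = complex_of_real (w s) * X i j (dlt 0) s"
        if "i < n" "j < n" for i j s
        using fm_spec(2)[OF XV[OF that] phi, of s] by (simp add: w_def delta_e_dlt)
      show "w s \<ge> 0" for s by (simp add: w_def)
      show "w summable_on UNIV" by (rule ws)
      show "l2_norm (\<lambda>i. if i < n then \<Sum>j<n. X i j (dlt 0) s * v j else 0) \<le> L1_mat_norm n X * l2_norm v"
        if "v \<in> l2" for s v by (rule Ab_bound[OF XV that])
      show "L1_mat_norm n X \<ge> 0" by (rule L0)
    qed
    also have "\<dots> \<le> C0 / t powr (real (dim H) / 2) * L1_mat_norm n X"
      by (rule mult_right_mono[OF wb L0])
    finally show "mat_norm n (\<lambda>i j. fourier_mult psi t (X i j)) \<le> C0 / t powr (real (dim H) / 2) * L1_mat_norm n X" .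
  qed
qed

end
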